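(* Let $m\ge n$, let $\bar A\in\mathbb R^{m\times n}$, $\bar{\mathbf b}\in\mathbb R^m$, $\bar{\mathbf c}\in\mathbb R^n$ with $\|\bar A\|,\|\bar{\mathbf b}\|,\|\bar{\mathbf c}\|\le1$, let $0<\sigma^2\le1$, and let $A,\mathbf b,\mathbf c$ be obtained by adding independent $N(0,\sigma^2)$ random variables to every entry of $\bar A,\bar{\mathbf b},\bar{\mathbf c}$. Let $\mathcal F$ be the event that the linear program $\max\mathbf c\mathbf x$ s.t. $A\mathbf x\le\mathbf b$, $\mathbf x\ge0$ is feasible and bounded. Then for every $\epsilon>0$, \[ \Pr\left[\alpha_P(A,\mathbf b,\mathbf c)\le\frac{\epsilon}{(\|A\|+2)^2(\|\mathbf x^*\|+1)}\ \text{and}\ \mathcal F\right]\le\frac{8\epsilon n(m+1)}{\sigma^2}. \]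
   Context: $\|\cdot\|$ is the Euclidean norm for vectors and the spectral norm for matrices. On $\mathcal F$, with probability one the program has a unique optimal solution $\mathbf x^*$ (and a unique dual optimal solution for the dual $\min\mathbf y\mathbf b$, $\mathbf yA\ge\mathbf c$, $\mathbf y\ge0$). $\alpha_P(A,\mathbf b,\mathbf c)=\min_{i: x^*_i>0}x^*_i$. *)

theory Defs
  imports "HOL-Analysis.Analysis" "HOL-Probability.Probability"
begin

definition lp_feasible :: "real^'n^'m \<Rightarrow> real^'m \<Rightarrow> real^'n \<Rightarrow> bool" where
  "lp_feasible A b x \<longleftrightarrow> (\<forall>j. 0 \<le> x $ j) \<and> (\<forall>i. (A *v x) $ i \<le> b $ i)"

definition lp_feasible_bounded :: "real^'n^'m \<Rightarrow> real^'m \<Rightarrow> real^'n \<Rightarrow> bool" where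
  "lp_feasible_bounded A b c \<longleftrightarrow>
     (\<exists>x. lp_feasible A b x) \<and> bdd_above ((\<lambda>x. c \<bullet> x) ` {x. lp_feasible A b x})"

text \<open>The (almost surely unique) optimal solution x*.\<close>
definition lp_opt :: "real^'n^'m \<Rightarrow> real^'m \<Rightarrow> real^'n \<Rightarrow> real^'n" where
  "lp_opt A b c = (THE x. lp_feasible A b x \<and> (\<forall>y. lp_feasible A b y \<longrightarrow> c \<bullet> y \<le> c \<bullet> x))"

definition alpha_P :: "real^'n^'m \<Rightarrow> real^'m \<Rightarrow> real^'n \<Rightarrow> ereal" where
  "alpha_P A b c = (INF j\<in>{j. 0 < lp_opt A b c $ j}. ereal (lp_opt A b c $ j))"

definition spec_norm :: "real^'n^'m \<Rightarrow> real" where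
  "spec_norm A = onorm (\<lambda>x. A *v x)"

text \<open>Distribution of (A,b,c): every entry of (Abar,bbar,cbar) perturbed by an
  independent Gaussian of mean 0 and standard deviation \<sigma> (variance \<sigma>^2).\<close>
definition gauss_perturb ::
  "real^'n^'m \<Rightarrow> real^'m \<Rightarrow> real^'n \<Rightarrow> real \<Rightarrow> ((real^'n^'m) \<times> (real^'m) \<times> (real^'n)) measure" where
  "gauss_perturb Abar bbar cbar \<sigma> =
     density lborel (\<lambda>(A, b, c). ennreal
       ((\<Prod>i\<in>UNIV. \<Prod>j\<in>UNIV. normal_density (Abar $ i $ j) \<sigma> (A $ i $ j)) *
        (\<Prod>i\<in>UNIV. normal_density (bbar $ i) \<sigma> (b $ i)) *
        (\<Prod>j\<in>UNIV. normal_density (cbar $ j) \<sigma> (c $ j))))"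

end

theory Submission
  imports Defs
begin

lemma product_sigma_finite_lborel: "product_sigma_finite (\<lambda>_. lborel)"
  unfolding product_sigma_finite_def by (simp add: lborel.sigma_finite_measure_axioms)

lemma nn_integral_prod_Basis:
  fixes f :: "'a::euclidean_space \<Rightarrow> real \<Rightarrow> ennreal"
  assumes [measurable]: "\<And>u. u \<in> Basis \<Longrightarrow> f u \<in> borel_measurable borel"
  shows "(\<integral>\<^sup>+x. (\<Prod>u\<in>Basis. f u (x \<bullet> u)) \<partial>(lborel::'a measure)) = (\<Prod>u\<in>Basis. \<integral>\<^sup>+t. f u t \<partial>lborel)"
proof -
  have m: "(\<lambda>x::'a. \<Prod>u\<in>Basis. f u (x \<bullet> u)) \<in> borel_measurable borel"
    by (intro borel_measurable_prod_ennreal) (auto intro: measurable_compose[OF _ assms])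
  have "(\<integral>\<^sup>+x. (\<Prod>u\<in>Basis. f u (x \<bullet> u)) \<partial>(lborel::'a measure))
     = (\<integral>\<^sup>+x. (\<Prod>u\<in>Basis. f u ((\<Sum>b\<in>Basis. x b *\<^sub>R b) \<bullet> u)) \<partial>(\<Pi>\<^sub>M b\<in>Basis. lborel))"
    apply (subst lborel_eq)
    apply (subst nn_integral_distr)
      apply (auto simp: m)
    done
  also have "\<dots> = (\<integral>\<^sup>+x. (\<Prod>u\<in>Basis. f u (x u)) \<partial>(\<Pi>\<^sub>M b\<in>Basis. lborel))"
    by (intro nn_integral_cong prod.cong refl) (simp add: inner_sum_left_Basis)
  also have "\<dots> = (\<Prod>u\<in>Basis. \<integral>\<^sup>+t. f u t \<partial>lborel)"
    by (rule product_sigma_finite.product_nn_integral_prod[OF product_sigma_finite_lborel]) auto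
  finally show ?thesis .
qed

lemma nn_integral_normal_density:
  assumes "0 < \<sigma>"
  shows "(\<integral>\<^sup>+t. ennreal (normal_density \<mu> \<sigma> t) \<partial>lborel) = 1"
  using assms by (subst nn_integral_eq_integral) auto

lemma gauss_Basis_integral:
  assumes "0 < \<sigma>"
  shows "(\<integral>\<^sup>+x. (\<Prod>u\<in>Basis. ennreal (normal_density (\<mu> \<bullet> u) \<sigma> (x \<bullet> u))) \<partial>(lborel::'a::euclidean_space measure)) = 1"
  using assms by (subst nn_integral_prod_Basis) (auto simp: nn_integral_normal_density)

lemma Basis_vec_real: "(Basis :: (real^'k) set) = (\<lambda>i. axis i 1) ` UNIV"
  by (auto simp: Basis_vec_def)

lemma Basis_mat_real: "(Basis :: (real^'n^'m) set) = (\<lambda>(i,j). axis i (axis j 1)) ` UNIV"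
  by (auto simp: Basis_vec_def)

lemma prod_Basis_vec:
  fixes F :: "real^'k \<Rightarrow> 'b::comm_monoid_mult"
  shows "(\<Prod>u\<in>Basis. F u) = (\<Prod>i\<in>UNIV. F (axis i 1))"
  unfolding Basis_vec_real by (subst prod.reindex) (auto simp: inj_on_def axis_eq_axis)

lemma prod_Basis_mat:
  fixes F :: "real^'n^'m \<Rightarrow> 'b::comm_monoid_mult"
  shows "(\<Prod>u\<in>Basis. F u) = (\<Prod>i\<in>UNIV. \<Prod>j\<in>UNIV. F (axis i (axis j 1)))"
  unfolding Basis_mat_real
  apply (subst prod.reindex)
   apply (auto simp: inj_on_def axis_eq_axis)[1]
  apply (subst prod.cartesian_product)
  apply (simp add: case_prod_beta)
  done

lemma gauss_vec_integral:
  assumes "0 < \<sigma>"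
  shows "(\<integral>\<^sup>+x. ennreal (\<Prod>i\<in>UNIV. normal_density (\<mu> $ i) \<sigma> (x $ i)) \<partial>(lborel::(real^'k) measure)) = 1"
proof -
  have "\<And>x::real^'k. ennreal (\<Prod>i\<in>UNIV. normal_density (\<mu> $ i) \<sigma> (x $ i)) =
     (\<Prod>u\<in>Basis. ennreal (normal_density (\<mu> \<bullet> u) \<sigma> (x \<bullet> u)))"
    by (simp add: prod_Basis_vec inner_axis prod_ennreal)
  then show ?thesis using gauss_Basis_integral[OF assms, where 'a="real^'k"] by simp
qed

lemma gauss_mat_integral:
  assumes "0 < \<sigma>"
  shows "(\<integral>\<^sup>+x. ennreal (\<Prod>i\<in>UNIV. \<Prod>j\<in>UNIV. normal_density (\<mu> $ i $ j) \<sigma> (x $ i $ j)) \<partial>(lborel::(real^'n^'m) measure)) = 1"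
proof -
  have "\<And>x::real^'n^'m. ennreal (\<Prod>i\<in>UNIV. \<Prod>j\<in>UNIV. normal_density (\<mu> $ i $ j) \<sigma> (x $ i $ j)) =
     (\<Prod>u\<in>Basis. ennreal (normal_density (\<mu> \<bullet> u) \<sigma> (x \<bullet> u)))"
    by (simp add: prod_Basis_mat inner_axis prod_ennreal prod_nonneg)
  then show ?thesis using gauss_Basis_integral[OF assms, where 'a="real^'n^'m"] by simp
qed

lemma norm_sq_vec: "(norm (x::real^'k))\<^sup>2 = (\<Sum>i\<in>UNIV. (x $ i)\<^sup>2)"
  unfolding power2_norm_eq_inner inner_vec_def by (simp add: power2_eq_square)

lemma gauss_vec_exp:
  "(\<Prod>i\<in>UNIV. normal_density (\<mu> $ i) s ((x::real^'k) $ i)) =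
     (1 / sqrt (2 * pi * s\<^sup>2)) ^ CARD('k) * exp (- (norm (x - \<mu>))\<^sup>2 / (2 * s\<^sup>2))"
proof -
  have e: "(\<Prod>i\<in>UNIV. exp (-(x $ i - \<mu> $ i)\<^sup>2 / (2 * s\<^sup>2))) = exp (- (norm (x - \<mu>))\<^sup>2 / (2 * s\<^sup>2))"
    by (simp add: exp_sum[symmetric] norm_sq_vec sum_divide_distrib sum_negf)
  show ?thesis unfolding normal_density_def prod.distrib e by simp
qed

lemma shift_ineq:
  fixes w v :: "'a::real_normed_vector"
  assumes "t > 0"
  shows "(norm w)\<^sup>2 / (1 + t) \<le> (norm (w + s *\<^sub>R v))\<^sup>2 + s\<^sup>2 * (norm v)\<^sup>2 / t"
proof -
  define \<alpha> where "\<alpha> = norm (w + s *\<^sub>R v)"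
  define \<beta> where "\<beta> = \<bar>s\<bar> * norm v"
  have "norm w \<le> \<alpha> + \<beta>"
    unfolding \<alpha>_def \<beta>_def
    using norm_triangle_ineq4[of "w + s *\<^sub>R v" "s *\<^sub>R v"] by simp
  then have "(norm w)\<^sup>2 \<le> (\<alpha> + \<beta>)\<^sup>2"
    by (intro power_mono) auto
  also have "(\<alpha> + \<beta>)\<^sup>2 \<le> (1 + t) * \<alpha>\<^sup>2 + (1 + 1/t) * \<beta>\<^sup>2"
  proof -
    have "0 \<le> (t * \<alpha> - \<beta>)\<^sup>2" by simp
    then have "2 * \<alpha> * \<beta> * t \<le> t\<^sup>2 * \<alpha>\<^sup>2 + \<beta>\<^sup>2" by (simp add: power2_eq_square algebra_simps)
    then have "2 * \<alpha> * \<beta> \<le> t * \<alpha>\<^sup>2 + \<beta>\<^sup>2 / t"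
      using assms by (simp add: field_simps power2_eq_square)
    then show ?thesis using assms by (simp add: power2_eq_square field_simps)
  qed
  finally have "(norm w)\<^sup>2 \<le> (1 + t) * \<alpha>\<^sup>2 + (1 + 1/t) * \<beta>\<^sup>2" .
  then have "(norm w)\<^sup>2 / (1 + t) \<le> \<alpha>\<^sup>2 + \<beta>\<^sup>2 / t"
    using assms by (simp add: field_simps)
  moreover have "\<beta>\<^sup>2 = s\<^sup>2 * (norm v)\<^sup>2" unfolding \<beta>_def by (simp add: power_mult_distrib)
  ultimately show ?thesis unfolding \<alpha>_def by simp
qed

lemma psi_g_le:
  fixes b bbar v :: "real^'m"
  assumes \<sigma>: "\<sigma> > 0" and v: "v \<noteq> 0"
  defines "t \<equiv> 1 / real CARD('m)"
  defines "\<tau> \<equiv> \<sigma> * sqrt t / norm v"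
  defines "\<sigma>' \<equiv> \<sigma> * sqrt (1 + t)"
  shows "normal_density 0 \<tau> s * (\<Prod>i\<in>UNIV. normal_density (bbar$i) \<sigma> ((b + s *\<^sub>R v)$i))
     \<le> (1 / sqrt (2 * pi * \<tau>\<^sup>2)) * sqrt (1 + t) ^ CARD('m) * (\<Prod>i\<in>UNIV. normal_density (bbar$i) \<sigma>' (b$i))"
proof -
  have t: "t > 0" unfolding t_def by simp
  have nv: "norm v > 0" using v by simp
  have tau: "\<tau> > 0" unfolding \<tau>_def using \<sigma> t nv by simp
  have tau2: "\<tau>\<^sup>2 = \<sigma>\<^sup>2 * t / (norm v)\<^sup>2" unfolding \<tau>_def using t by (simp add: power_mult_distrib power_divide)
  have sig2: "\<sigma>'\<^sup>2 = \<sigma>\<^sup>2 * (1 + t)" unfolding \<sigma>'_def using t by (simp add: power_mult_distrib)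
  define w where "w = b - bbar"
  define K where "K = 1 / sqrt (2 * pi * \<sigma>\<^sup>2)"
  have K': "1 / sqrt (2 * pi * \<sigma>'\<^sup>2) = K / sqrt (1 + t)"
  proof -
    have "2 * pi * (\<sigma>\<^sup>2 * (1 + t)) = (2 * pi * \<sigma>\<^sup>2) * (1 + t)" by simp
    then have "sqrt (2 * pi * (\<sigma>\<^sup>2 * (1 + t))) = sqrt (2 * pi * \<sigma>\<^sup>2) * sqrt (1 + t)"
      by (simp only: real_sqrt_mult)
    then show ?thesis unfolding K_def sig2 by simp
  qed
  have L: "normal_density 0 \<tau> s * (\<Prod>i\<in>UNIV. normal_density (bbar$i) \<sigma> ((b + s *\<^sub>R v)$i))
     = (1 / sqrt (2 * pi * \<tau>\<^sup>2)) * K ^ CARD('m) * exp (- s\<^sup>2 / (2 * \<tau>\<^sup>2) - (norm (w + s *\<^sub>R v))\<^sup>2 / (2 * \<sigma>\<^sup>2))"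
    unfolding gauss_vec_exp K_def w_def
    by (simp add: normal_density_def exp_diff exp_minus field_simps algebra_simps)
  have R: "(1 / sqrt (2 * pi * \<tau>\<^sup>2)) * sqrt (1 + t) ^ CARD('m) * (\<Prod>i\<in>UNIV. normal_density (bbar$i) \<sigma>' (b$i))
     = (1 / sqrt (2 * pi * \<tau>\<^sup>2)) * K ^ CARD('m) * exp (- (norm w)\<^sup>2 / (2 * \<sigma>\<^sup>2 * (1 + t)))"
  proof -
    have "sqrt (1 + t) ^ CARD('m) * (K / sqrt (1 + t)) ^ CARD('m) = K ^ CARD('m)"
      using t by (simp add: power_mult_distrib[symmetric])
    then show ?thesis
      unfolding gauss_vec_exp K' unfolding w_def sig2 by (simp add: mult.assoc)
  qed
  have ex: "- s\<^sup>2 / (2 * \<tau>\<^sup>2) - (norm (w + s *\<^sub>R v))\<^sup>2 / (2 * \<sigma>\<^sup>2) \<le> - (norm w)\<^sup>2 / (2 * \<sigma>\<^sup>2 * (1 + t))"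
  proof -
    have "(norm w)\<^sup>2 / (1 + t) \<le> (norm (w + s *\<^sub>R v))\<^sup>2 + s\<^sup>2 * (norm v)\<^sup>2 / t"
      by (rule shift_ineq[OF t])
    then have "(norm w)\<^sup>2 / (1 + t) / (2 * \<sigma>\<^sup>2) \<le> ((norm (w + s *\<^sub>R v))\<^sup>2 + s\<^sup>2 * (norm v)\<^sup>2 / t) / (2 * \<sigma>\<^sup>2)"
      using \<sigma> by (intro divide_right_mono) auto
    moreover have "s\<^sup>2 * (norm v)\<^sup>2 / t / (2 * \<sigma>\<^sup>2) = s\<^sup>2 / (2 * \<tau>\<^sup>2)"
      unfolding tau2 using t nv \<sigma> by (simp add: field_simps)
    ultimately show ?thesis by (simp add: field_simps add_divide_distrib)
  qed
  have "(1 / sqrt (2 * pi * \<tau>\<^sup>2)) * K ^ CARD('m) * exp (- s\<^sup>2 / (2 * \<tau>\<^sup>2) - (norm (w + s *\<^sub>R v))\<^sup>2 / (2 * \<sigma>\<^sup>2))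
     \<le> (1 / sqrt (2 * pi * \<tau>\<^sup>2)) * K ^ CARD('m) * exp (- (norm w)\<^sup>2 / (2 * \<sigma>\<^sup>2 * (1 + t)))"
    using ex unfolding K_def by (intro mult_left_mono) auto
  then show ?thesis unfolding L R .
qed

lemma vec_nth_meas[measurable]: "(\<lambda>b::'a::real_normed_vector^'m. b$i) \<in> borel_measurable borel"
  by (intro borel_measurable_continuous_onI continuous_intros)

lemma gvec_meas[measurable]: "(\<lambda>b::real^'m. \<Prod>i\<in>UNIV. normal_density (\<mu>$i) \<sigma> (b$i)) \<in> borel_measurable borel"
  by (intro borel_measurable_prod measurable_compose[OF _ borel_measurable_normal_density] vec_nth_meas)

lemma const_bound:
  fixes v :: "real^'m"
  assumes \<sigma>: "\<sigma> > 0" and v: "v \<noteq> 0"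
  defines "t \<equiv> 1 / real CARD('m)"
  defines "\<tau> \<equiv> \<sigma> * sqrt t / norm v"
  shows "(1 / sqrt (2 * pi * \<tau>\<^sup>2)) * sqrt (1 + t) ^ CARD('m) \<le> norm v * sqrt (real CARD('m)) / \<sigma>"
proof -
  define M where "M = real CARD('m)"
  have M: "M > 0" unfolding M_def by simp
  have nv: "norm v > 0" using v by simp
  have "sqrt (2 * pi * \<tau>\<^sup>2) = sqrt (2 * pi) * \<sigma> / (norm v * sqrt M)"
    unfolding \<tau>_def t_def M_def using \<sigma> nv
    by (simp add: real_sqrt_mult real_sqrt_divide power_mult_distrib power_divide)
  then have a: "1 / sqrt (2 * pi * \<tau>\<^sup>2) = norm v * sqrt M / (\<sigma> * sqrt (2 * pi))"
    by simp
  have "(1 + t) ^ CARD('m) \<le> exp 1"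
    using exp_ge_one_plus_x_over_n_power_n[of "CARD('m)" 1] unfolding t_def by simp
  also have "\<dots> \<le> 2 * pi" using exp_le pi_gt3 by linarith
  finally have "sqrt ((1 + t) ^ CARD('m)) \<le> sqrt (2 * pi)" by simp
  then have b: "sqrt (1 + t) ^ CARD('m) \<le> sqrt (2 * pi)" by (simp add: real_sqrt_power)
  have "(1 / sqrt (2 * pi * \<tau>\<^sup>2)) * sqrt (1 + t) ^ CARD('m) \<le> (norm v * sqrt M / (\<sigma> * sqrt (2 * pi))) * sqrt (2 * pi)"
    unfolding a using b \<sigma> nv M by (intro mult_left_mono) auto
  also have "\<dots> = norm v * sqrt M / \<sigma>" by simp
  finally show ?thesis unfolding M_def .
qed

lemma gauss_line_bound:
  fixes bbar v :: "real^'m" and E :: "(real^'m) set"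
  assumes \<sigma>: "\<sigma> > 0" and v: "v \<noteq> 0" and E[measurable]: "E \<in> sets borel" and L: "L \<ge> 0"
    and sl: "\<And>b. emeasure lborel {s. b + s *\<^sub>R v \<in> E} \<le> ennreal L"
  shows "(\<integral>\<^sup>+b. ennreal (\<Prod>i\<in>UNIV. normal_density (bbar$i) \<sigma> (b$i)) * indicator E b \<partial>lborel)
          \<le> ennreal (L * norm v * sqrt (real CARD('m)) / \<sigma>)"
proof -
  define g where "g b = ennreal (\<Prod>i\<in>UNIV. normal_density (bbar$i) \<sigma> (b$i))" for b :: "real^'m"
  have gm[measurable]: "g \<in> borel_measurable borel" unfolding g_def by measurable
  define I where "I = (\<integral>\<^sup>+b. g b * indicator E b \<partial>lborel)"
  define t where "t = 1 / real CARD('m)"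
  define \<tau> where "\<tau> = \<sigma> * sqrt t / norm v"
  define \<sigma>' where "\<sigma>' = \<sigma> * sqrt (1 + t)"
  define C where "C = (1 / sqrt (2 * pi * \<tau>\<^sup>2)) * sqrt (1 + t) ^ CARD('m)"
  have t: "t > 0" unfolding t_def by simp
  have nv: "norm v > 0" using v by simp
  have tau: "\<tau> > 0" unfolding \<tau>_def using \<sigma> t nv by simp
  have sig': "\<sigma>' > 0" unfolding \<sigma>'_def using \<sigma> t by simp
  have C0: "C \<ge> 0" unfolding C_def using t by simp
  define H where "H b = ennreal (C * (\<Prod>i\<in>UNIV. normal_density (bbar$i) \<sigma>' (b$i)))" for b :: "real^'m"
  have Hm[measurable]: "H \<in> borel_measurable borel" unfolding H_def by measurable
  define \<psi> where "\<psi> s = ennreal (normal_density 0 \<tau> s)" for s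
  have \<psi>m[measurable]: "\<psi> \<in> borel_measurable borel" unfolding \<psi>_def by measurable
  have \<psi>1: "(\<integral>\<^sup>+s. \<psi> s \<partial>lborel) = 1" unfolding \<psi>_def using nn_integral_normal_density[OF tau] .
  have shift: "I = (\<integral>\<^sup>+b. g (b + s *\<^sub>R v) * indicator E (b + s *\<^sub>R v) \<partial>lborel)" for s
  proof -
    have "I = (\<integral>\<^sup>+b. g b * indicator E b \<partial>(distr lborel borel ((+) (s *\<^sub>R v))))"
      unfolding I_def lborel_distr_plus ..
    also have "\<dots> = (\<integral>\<^sup>+b. g (s *\<^sub>R v + b) * indicator E (s *\<^sub>R v + b) \<partial>lborel)"
      by (subst nn_integral_distr) auto
    finally show ?thesis by (simp add: add.commute)
  qed
  have "I = (\<integral>\<^sup>+s. \<psi> s \<partial>lborel) * I" using \<psi>1 by simp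
  also have "\<dots> = (\<integral>\<^sup>+s. \<psi> s * I \<partial>lborel)" by (rule nn_integral_multc[symmetric]) measurable
  also have "\<dots> = (\<integral>\<^sup>+s. (\<integral>\<^sup>+b. \<psi> s * (g (b + s *\<^sub>R v) * indicator E (b + s *\<^sub>R v)) \<partial>lborel) \<partial>lborel)"
  proof (rule nn_integral_cong)
    fix s :: real
    show "\<psi> s * I = (\<integral>\<^sup>+b. \<psi> s * (g (b + s *\<^sub>R v) * indicator E (b + s *\<^sub>R v)) \<partial>lborel)"
      by (subst nn_integral_cmult) (measurable, simp add: shift[of s])
  qed
  also have "\<dots> = (\<integral>\<^sup>+b. (\<integral>\<^sup>+s. \<psi> s * (g (b + s *\<^sub>R v) * indicator E (b + s *\<^sub>R v)) \<partial>lborel) \<partial>lborel)"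
    by (rule pair_sigma_finite.Fubini'[OF lborel_pair.pair_sigma_finite_axioms]) measurable
  also have "\<dots> \<le> (\<integral>\<^sup>+b. (\<integral>\<^sup>+s. H b * indicator {s. b + s *\<^sub>R v \<in> E} s \<partial>lborel) \<partial>lborel)"
  proof (intro nn_integral_mono)
    fix b :: "real^'m" and s :: real
    show "\<psi> s * (g (b + s *\<^sub>R v) * indicator E (b + s *\<^sub>R v)) \<le> H b * indicator {s. b + s *\<^sub>R v \<in> E} s"
    proof (cases "b + s *\<^sub>R v \<in> E")
      case True
      have "\<psi> s * g (b + s *\<^sub>R v) = ennreal (normal_density 0 \<tau> s * (\<Prod>i\<in>UNIV. normal_density (bbar$i) \<sigma> ((b + s *\<^sub>R v)$i)))"
        unfolding \<psi>_def g_def by (simp add: ennreal_mult prod_nonneg)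
      also have "\<dots> \<le> H b"
        unfolding H_def C_def \<tau>_def \<sigma>'_def t_def
        by (intro ennreal_leI psi_g_le[OF \<sigma> v])
      finally show ?thesis using True by simp
    qed simp
  qed
  also have "\<dots> = (\<integral>\<^sup>+b. H b * emeasure lborel {s. b + s *\<^sub>R v \<in> E} \<partial>lborel)"
    apply (rule nn_integral_cong)
    apply (subst nn_integral_cmult_indicator[symmetric])
     apply measurable
    done
  also have "\<dots> \<le> (\<integral>\<^sup>+b. H b * ennreal L \<partial>lborel)"
    by (intro nn_integral_mono mult_left_mono sl) auto
  also have "\<dots> = (\<integral>\<^sup>+b. H b \<partial>lborel) * ennreal L"
    by (rule nn_integral_multc) measurable
  also have "(\<integral>\<^sup>+b. H b \<partial>lborel) = ennreal C"
  proof -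
    have "(\<integral>\<^sup>+b. H b \<partial>lborel) = (\<integral>\<^sup>+b. ennreal C * ennreal (\<Prod>i\<in>UNIV. normal_density (bbar$i) \<sigma>' (b$i)) \<partial>lborel)"
      unfolding H_def using C0 by (simp add: ennreal_mult prod_nonneg)
    also have "\<dots> = ennreal C * (\<integral>\<^sup>+b. ennreal (\<Prod>i\<in>UNIV. normal_density (bbar$i) \<sigma>' (b$i)) \<partial>lborel)"
      by (rule nn_integral_cmult) measurable
    also have "\<dots> = ennreal C" using gauss_vec_integral[OF sig', of bbar] by simp
    finally show ?thesis .
  qed
  also have "ennreal C * ennreal L = ennreal (C * L)" using C0 L by (simp add: ennreal_mult)
  also have "\<dots> \<le> ennreal (L * norm v * sqrt (real CARD('m)) / \<sigma>)"
  proof (rule ennreal_leI)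
    have "C \<le> norm v * sqrt (real CARD('m)) / \<sigma>"
      unfolding C_def \<tau>_def t_def by (rule const_bound[OF \<sigma> v])
    then have "C * L \<le> (norm v * sqrt (real CARD('m)) / \<sigma>) * L" using L by (rule mult_right_mono)
    then show "C * L \<le> L * norm v * sqrt (real CARD('m)) / \<sigma>" by (simp add: field_simps)
  qed
  finally show ?thesis unfolding I_def g_def .
qed

definition crow :: "real^'n^'m \<Rightarrow> 'm + 'n \<Rightarrow> real^'n" where
  "crow A t = (case t of Inl i \<Rightarrow> A $ i | Inr k \<Rightarrow> - axis k 1)"

definition crhs :: "real^'m \<Rightarrow> 'm + 'n \<Rightarrow> real" where
  "crhs b t = (case t of Inl i \<Rightarrow> b $ i | Inr k \<Rightarrow> 0)"

lemma mv_inner: "(A *v x) $ i = A $ i \<bullet> x"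
  by (simp add: matrix_vector_mult_def inner_vec_def)

lemma allsum: "(\<forall>t. Q t) = ((\<forall>i. Q (Inl i)) \<and> (\<forall>k. Q (Inr k)))"
proof safe
  fix t assume "\<forall>i. Q (Inl i)" "\<forall>k. Q (Inr k)" then show "Q t" by (cases t) auto
qed auto

lemma feas_iff:
  fixes A :: "real^'n^'m" and b :: "real^'m" and x :: "real^'n"
  shows "lp_feasible A b x \<longleftrightarrow> (\<forall>t. crow A t \<bullet> x \<le> crhs b t)"
proof
  assume H: "lp_feasible A b x"
  show "\<forall>t. crow A t \<bullet> x \<le> crhs b t"
  proof
    fix t show "crow A t \<bullet> x \<le> crhs b t"
      using H by (cases t) (auto simp: lp_feasible_def crow_def crhs_def mv_inner inner_axis inner_axis')
  qed
next
  assume H: "\<forall>t. crow A t \<bullet> x \<le> crhs b t"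
  have "crow A (Inl i) \<bullet> x \<le> crhs b (Inl i :: 'm + 'n)" for i using H by blast
  moreover have "crow A (Inr k) \<bullet> x \<le> crhs b (Inr k :: 'm + 'n)" for k using H by blast
  ultimately show "lp_feasible A b x"
    by (auto simp: lp_feasible_def crow_def crhs_def mv_inner inner_axis inner_axis')
qed

lemma vec_expand: "(\<Sum>i\<in>UNIV. x$i *\<^sub>R axis i 1) = (x::real^'n)"
  using basis_expansion[of x] by (simp add: scalar_mult_eq_scaleR)

lemma sum_in_cone:
  assumes "convex_cone K" "finite I" "\<And>i. i \<in> I \<Longrightarrow> f i \<in> K"
  shows "(\<Sum>i\<in>I. f i) \<in> K"
  using assms(2,3)
proof (induction I rule: finite_induct)
  case empty then show ?case using assms(1) by (simp add: convex_cone_iff)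
next
  case (insert x F) then show ?case using assms(1) by (simp add: convex_cone_iff)
qed

lemma lp_attain:
  fixes A :: "real^'n^'m" and b :: "real^'m" and c :: "real^'n"
  assumes "lp_feasible_bounded A b c"
  shows "\<exists>z. lp_feasible A b z \<and> (\<forall>y. lp_feasible A b y \<longrightarrow> c \<bullet> y \<le> c \<bullet> z)"
proof -
  define G :: "real^'n \<Rightarrow> real^('m+'n)" where "G x = (\<chi> t. crow A t \<bullet> x)" for x
  have Glin: "G (u *\<^sub>R x + v *\<^sub>R y) = u *\<^sub>R G x + v *\<^sub>R G y" for u v x y
    unfolding G_def by (simp add: vec_eq_iff inner_add_right)
  have G0: "G 0 = 0" unfolding G_def by (simp add: vec_eq_iff)
  have Gneg: "G (- x) = - G x" for x unfolding G_def by (simp add: vec_eq_iff)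
  define h :: "real^('m+'n)" where "h = (\<chi> t. crhs b t)"
  define Gen :: "((real^('m+'n)) \<times> real) set" where
    "Gen = (\<lambda>k. (G (axis k 1), c $ k)) ` UNIV \<union> (\<lambda>k. (- G (axis k 1), - c $ k)) ` UNIV \<union> (\<lambda>t. (axis t 1, 0)) ` UNIV"
  define W :: "((real^('m+'n)) \<times> real) set" where
    "W = {(G x + s, c \<bullet> x) | x s. \<forall>t. 0 \<le> s $ t}"
  have finGen: "finite Gen" unfolding Gen_def by simp
  have coneW: "convex_cone W"
    unfolding convex_cone_iff
  proof (intro conjI ballI allI impI)
    show "0 \<in> W" unfolding W_def using G0 by (auto intro!: exI[of _ 0] simp: zero_prod_def)
  next
    fix p q assume "p \<in> W" "q \<in> W"
    then obtain x s y s' where p: "p = (G x + s, c \<bullet> x)" "\<forall>t. 0 \<le> s $ t"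
      and q: "q = (G y + s', c \<bullet> y)" "\<forall>t. 0 \<le> s' $ t" unfolding W_def by blast
    have "p + q = (G (x + y) + (s + s'), c \<bullet> (x + y))"
      using Glin[of 1 x 1 y] p q by (simp add: inner_add_right algebra_simps)
    moreover have "\<forall>t. 0 \<le> (s + s') $ t" using p q by simp
    ultimately show "p + q \<in> W" unfolding W_def by blast
  next
    fix p and r :: real assume "p \<in> W" "0 \<le> r"
    then obtain x s where p: "p = (G x + s, c \<bullet> x)" "\<forall>t. 0 \<le> s $ t" unfolding W_def by blast
    have "r *\<^sub>R p = (G (r *\<^sub>R x) + r *\<^sub>R s, c \<bullet> (r *\<^sub>R x))"
      using Glin[of r x 0 x] p by (simp add: algebra_simps)
    moreover have "\<forall>t. 0 \<le> (r *\<^sub>R s) $ t" using p \<open>0 \<le> r\<close> by simp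
    ultimately show "r *\<^sub>R p \<in> W" unfolding W_def by blast
  qed
  have GenW: "Gen \<subseteq> W"
  proof -
    have "(G (axis k 1), c $ k) \<in> W" for k
    proof -
      have "(G (axis k 1), c $ k) = (G (axis k 1) + 0, c \<bullet> axis k 1)" by (simp add: inner_axis)
      moreover have "\<forall>t'. 0 \<le> (0 :: real^('m+'n)) $ t'" by simp
      ultimately show ?thesis unfolding W_def by blast
    qed
    moreover have "(- G (axis k 1), - c $ k) \<in> W" for k
    proof -
      have "(- G (axis k 1), - c $ k) = (G (- axis k 1) + 0, c \<bullet> (- axis k 1))" by (simp add: inner_axis Gneg)
      moreover have "\<forall>t'. 0 \<le> (0 :: real^('m+'n)) $ t'" by simp
      ultimately show ?thesis unfolding W_def by blast
    qed
    moreover have "(axis t 1, 0) \<in> W" for t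
    proof -
      have "(axis t 1, 0) = (G 0 + axis t 1, c \<bullet> 0)" using G0 by simp
      moreover have "\<forall>t'. 0 \<le> (axis t 1 :: real^('m+'n)) $ t'" by (simp add: axis_def)
      ultimately show ?thesis unfolding W_def by blast
    qed
    ultimately show ?thesis unfolding Gen_def by auto
  qed
  have hullW: "convex_cone hull Gen \<subseteq> W"
    using GenW coneW by (simp add: hull_minimal)
  have Kc: "convex_cone (convex_cone hull Gen)" by (rule convex_cone_convex_cone_hull)
  have scl: "r *\<^sub>R p \<in> convex_cone hull Gen" if "p \<in> convex_cone hull Gen" "0 \<le> r" for p r
    using Kc that unfolding convex_cone_iff by blast
  have lin_in: "(r *\<^sub>R (G (axis k 1), c $ k)) \<in> convex_cone hull Gen" for r k
  proof (cases "r \<ge> 0")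
    case True
    have "(G (axis k 1), c $ k) \<in> convex_cone hull Gen" unfolding Gen_def by (intro hull_inc) auto
    then show ?thesis using scl True by blast
  next
    case False
    have "(- G (axis k 1), - c $ k) \<in> convex_cone hull Gen" unfolding Gen_def by (intro hull_inc) auto
    then have "(- r) *\<^sub>R (- G (axis k 1), - c $ k) \<in> convex_cone hull Gen" by (rule scl) (use False in auto)
    moreover have "(- r) *\<^sub>R (- G (axis k 1), - c $ k) = r *\<^sub>R (G (axis k 1), c $ k)" by simp
    ultimately show ?thesis by (simp only:)
  qed
  have Wsub: "(G x + s, c \<bullet> x) \<in> convex_cone hull Gen" if s: "\<forall>t. 0 \<le> s $ t" for x s
  proof -
    have fx: "G x = (\<Sum>k\<in>UNIV. x$k *\<^sub>R G (axis k 1))"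
      unfolding G_def by (subst (1) vec_expand[of x, symmetric]) (simp add: vec_eq_iff sum_component inner_sum_right)
    have cx: "c \<bullet> x = (\<Sum>k\<in>UNIV. x$k * c$k)"
      by (subst (1) vec_expand[of x, symmetric]) (simp add: inner_sum_right inner_axis mult.commute)
    have e1: "(G x, c \<bullet> x) = (\<Sum>k\<in>UNIV. (x $ k) *\<^sub>R (G (axis k 1), c $ k))"
      by (simp add: prod_eq_iff fst_sum snd_sum fx cx)
    have e2: "(s, 0) = (\<Sum>t\<in>UNIV. (s $ t) *\<^sub>R ((axis t 1, 0) :: (real^('m+'n)) \<times> real))"
      by (simp add: prod_eq_iff fst_sum snd_sum vec_expand)
    have i1: "(G x, c \<bullet> x) \<in> convex_cone hull Gen"
      unfolding e1 by (intro sum_in_cone[OF Kc] lin_in) auto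
    have i2: "(s, 0) \<in> convex_cone hull Gen"
      unfolding e2
    proof (intro sum_in_cone[OF Kc])
      fix t
      have "((axis t 1, 0) :: (real^('m+'n)) \<times> real) \<in> convex_cone hull Gen" unfolding Gen_def by (intro hull_inc) auto
      then show "(s $ t) *\<^sub>R ((axis t 1, 0) :: (real^('m+'n)) \<times> real) \<in> convex_cone hull Gen"
        using s by (intro scl) auto
    qed auto
    have "(G x + s, c \<bullet> x) = (G x, c \<bullet> x) + (s, 0)" by simp
    moreover have "(G x, c \<bullet> x) + (s, 0) \<in> convex_cone hull Gen" using i1 i2 Kc unfolding convex_cone_iff by blast
    ultimately show ?thesis by (simp only:)
  qed
  define V where "V = {r. (h, r) \<in> convex_cone hull Gen}"
  have closedV: "closed V"
  proof -
    have "closed (convex_cone hull Gen)" by (rule closed_convex_cone_hull[OF finGen])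
    then have "closed ((\<lambda>r. (h, r)) -` (convex_cone hull Gen))"
      by (rule continuous_closed_vimage) (intro continuous_intros)
    then show ?thesis unfolding V_def by (simp add: vimage_def)
  qed
  have Vfeas: "c \<bullet> x \<in> V" if "lp_feasible A b x" for x
  proof -
    have "\<forall>t. 0 \<le> (h - G x) $ t" using that unfolding feas_iff h_def G_def by simp
    then have "(G x + (h - G x), c \<bullet> x) \<in> convex_cone hull Gen" by (rule Wsub)
    then show ?thesis unfolding V_def by simp
  qed
  have Vsub: "\<exists>x. lp_feasible A b x \<and> c \<bullet> x = r" if "r \<in> V" for r
  proof -
    have "(h, r) \<in> W" using that hullW unfolding V_def by auto
    then obtain x s where "h = G x + s" "r = c \<bullet> x" "\<forall>t. 0 \<le> s $ t" unfolding W_def by auto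
    then have "lp_feasible A b x"
      unfolding feas_iff by (auto simp: h_def G_def vec_eq_iff)
    then show ?thesis using \<open>r = c \<bullet> x\<close> by blast
  qed
  obtain x0 where x0: "lp_feasible A b x0" using assms unfolding lp_feasible_bounded_def by auto
  have Vne: "V \<noteq> {}" using Vfeas[OF x0] by auto
  have Vbdd: "bdd_above V"
  proof -
    obtain M where M: "\<And>x. lp_feasible A b x \<Longrightarrow> c \<bullet> x \<le> M"
      using assms unfolding lp_feasible_bounded_def bdd_above_def by auto
    show ?thesis unfolding bdd_above_def using Vsub M by metis
  qed
  have "Sup V \<in> V" by (rule closed_contains_Sup[OF Vne Vbdd closedV])
  then obtain z where z: "lp_feasible A b z" "c \<bullet> z = Sup V" using Vsub by blast
  have "c \<bullet> y \<le> c \<bullet> z" if "lp_feasible A b y" for y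
    unfolding z(2) by (rule cSup_upper[OF Vfeas[OF that] Vbdd])
  then show ?thesis using z(1) by blast
qed

lemma kkt:
  fixes A :: "real^'n^'m" and b :: "real^'m" and c z :: "real^'n"
  assumes z: "lp_feasible A b z" and opt: "\<forall>y. lp_feasible A b y \<longrightarrow> c \<bullet> y \<le> c \<bullet> z"
  shows "\<exists>\<mu>. (\<forall>t. 0 \<le> \<mu> t) \<and> (\<forall>t. \<mu> t \<noteq> 0 \<longrightarrow> crow A t \<bullet> z = crhs b t) \<and> c = (\<Sum>t\<in>UNIV. \<mu> t *\<^sub>R crow A t)"
proof -
  define T where "T = {t. crow A t \<bullet> z = crhs b t}"
  define Cn where "Cn = {(\<Sum>t\<in>UNIV. \<mu> t *\<^sub>R crow A t) | \<mu>. (\<forall>t. 0 \<le> \<mu> t) \<and> (\<forall>t. t \<notin> T \<longrightarrow> \<mu> t = 0)}"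
  have coneCn: "convex_cone Cn"
    unfolding convex_cone_iff
  proof (intro conjI ballI allI impI)
    have "(0::real^'n) = (\<Sum>t\<in>UNIV. (0::real) *\<^sub>R crow A t)" by simp
    then show "0 \<in> Cn" unfolding Cn_def mem_Collect_eq by (intro exI[of _ "\<lambda>t. 0"]) simp
  next
    fix p q assume "p \<in> Cn" "q \<in> Cn"
    then obtain \<mu> \<nu> where p: "p = (\<Sum>t\<in>UNIV. \<mu> t *\<^sub>R crow A t)" "\<forall>t. 0 \<le> \<mu> t" "\<forall>t. t \<notin> T \<longrightarrow> \<mu> t = 0"
      and q: "q = (\<Sum>t\<in>UNIV. \<nu> t *\<^sub>R crow A t)" "\<forall>t. 0 \<le> \<nu> t" "\<forall>t. t \<notin> T \<longrightarrow> \<nu> t = 0"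
      unfolding Cn_def by blast
    have "p + q = (\<Sum>t\<in>UNIV. (\<mu> t + \<nu> t) *\<^sub>R crow A t)"
      unfolding p q by (simp add: sum.distrib scaleR_add_left)
    moreover have "\<forall>t. 0 \<le> \<mu> t + \<nu> t" "\<forall>t. t \<notin> T \<longrightarrow> \<mu> t + \<nu> t = 0" using p q by auto
    ultimately show "p + q \<in> Cn" unfolding Cn_def mem_Collect_eq by (intro exI[of _ "\<lambda>t. \<mu> t + \<nu> t"]) simp
  next
    fix p and r :: real assume "p \<in> Cn" "0 \<le> r"
    then obtain \<mu> where p: "p = (\<Sum>t\<in>UNIV. \<mu> t *\<^sub>R crow A t)" "\<forall>t. 0 \<le> \<mu> t" "\<forall>t. t \<notin> T \<longrightarrow> \<mu> t = 0"
      unfolding Cn_def by blast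
    have "r *\<^sub>R p = (\<Sum>t\<in>UNIV. (r * \<mu> t) *\<^sub>R crow A t)"
      unfolding p by (simp add: scaleR_sum_right)
    moreover have "\<forall>t. 0 \<le> r * \<mu> t" "\<forall>t. t \<notin> T \<longrightarrow> r * \<mu> t = 0" using p \<open>0 \<le> r\<close> by auto
    ultimately show "r *\<^sub>R p \<in> Cn" unfolding Cn_def mem_Collect_eq by (intro exI[of _ "\<lambda>t. r * \<mu> t"]) simp
  qed
  have TCn: "crow A ` T \<subseteq> Cn"
  proof
    fix v assume "v \<in> crow A ` T"
    then obtain t where t: "t \<in> T" "v = crow A t" by auto
    have "v = (\<Sum>t'\<in>UNIV. (if t' = t then 1 else 0) *\<^sub>R crow A t')"
      using t by (simp add: if_distrib[of "\<lambda>x. x *\<^sub>R _"] cong: if_cong)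
    then show "v \<in> Cn" unfolding Cn_def mem_Collect_eq using t by (intro exI[of _ "\<lambda>t'. if t' = t then 1 else 0"]) auto
  qed
  define K where "K = convex_cone hull (crow A ` T)"
  have KCn: "K \<subseteq> Cn" unfolding K_def using TCn coneCn by (simp add: hull_minimal)
  show ?thesis
  proof (cases "c \<in> K")
    case True
    then obtain \<mu> where \<mu>: "c = (\<Sum>t\<in>UNIV. \<mu> t *\<^sub>R crow A t)" "\<forall>t. 0 \<le> \<mu> t" "\<forall>t. t \<notin> T \<longrightarrow> \<mu> t = 0"
      using KCn unfolding Cn_def by blast
    then show ?thesis unfolding T_def by blast
  next
    case False
    have Kcl: "closed K" unfolding K_def by (rule closed_convex_cone_hull) simp
    have Kcv: "convex K" unfolding K_def by (rule convex_convex_cone_hull)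
    have Kcc: "convex_cone K" unfolding K_def by (rule convex_cone_convex_cone_hull)
    obtain a \<beta> where ab: "a \<bullet> c < \<beta>" "\<forall>x\<in>K. \<beta> < a \<bullet> x"
      using separating_hyperplane_closed_point[OF Kcv Kcl False] by blast
    have "0 \<in> K" using Kcc unfolding convex_cone_iff by blast
    then have \<beta>: "\<beta> < 0" using ab by auto
    have rowpos: "0 \<le> a \<bullet> crow A t" if "t \<in> T" for t
    proof (rule ccontr)
      assume neg: "\<not> 0 \<le> a \<bullet> crow A t"
      have inK: "crow A t \<in> K" unfolding K_def using that by (intro hull_inc) auto
      define l where "l = \<beta> / (a \<bullet> crow A t)"
      have l: "0 \<le> l" unfolding l_def using neg \<beta> by (simp add: divide_nonpos_neg)
      have "l *\<^sub>R crow A t \<in> K" using Kcc inK l unfolding convex_cone_iff by blast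
      then have "\<beta> < a \<bullet> (l *\<^sub>R crow A t)" using ab by blast
      moreover have "a \<bullet> (l *\<^sub>R crow A t) = \<beta>" unfolding l_def using neg by simp
      ultimately show False by simp
    qed
    define d where "d = - a"
    have cd: "0 < c \<bullet> d" unfolding d_def using ab \<beta> by (simp add: inner_commute)
    have rd: "crow A t \<bullet> d \<le> 0" if "t \<in> T" for t unfolding d_def using rowpos[OF that] by (simp add: inner_commute)
    define sl where "sl t = crhs b t - crow A t \<bullet> z" for t
    have slpos: "0 < sl t" if "t \<notin> T" for t
    proof -
      have "crow A t \<bullet> z \<le> crhs b t" using z unfolding feas_iff by blast
      moreover have "crow A t \<bullet> z \<noteq> crhs b t" using that unfolding T_def by simp
      ultimately show ?thesis unfolding sl_def by simp
    qed
    define \<eta> where "\<eta> = Min (insert 1 ((\<lambda>t. sl t / (\<bar>crow A t \<bullet> d\<bar> + 1)) ` (- T)))"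
    have fin: "finite (insert 1 ((\<lambda>t. sl t / (\<bar>crow A t \<bullet> d\<bar> + 1)) ` (- T)))" by simp
    have \<eta>pos: "0 < \<eta>" unfolding \<eta>_def using slpos
      by (subst Min_gr_iff[OF fin]) (auto intro!: divide_pos_pos)
    have \<eta>le: "\<eta> \<le> sl t / (\<bar>crow A t \<bullet> d\<bar> + 1)" if "t \<notin> T" for t
      unfolding \<eta>_def using that by (intro Min_le[OF fin]) auto
    define z' where "z' = z + \<eta> *\<^sub>R d"
    have fz': "lp_feasible A b z'"
      unfolding feas_iff
    proof
      fix t
      show "crow A t \<bullet> z' \<le> crhs b t"
      proof (cases "t \<in> T")
        case True
        then have "crow A t \<bullet> z = crhs b t" unfolding T_def by simp
        moreover have "\<eta> * (crow A t \<bullet> d) \<le> 0" using rd[OF True] \<eta>pos by (simp add: mult_nonneg_nonpos)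
        ultimately show ?thesis unfolding z'_def by (simp add: inner_add_right)
      next
        case False
        have "\<eta> * (crow A t \<bullet> d) \<le> \<eta> * (\<bar>crow A t \<bullet> d\<bar> + 1)" using \<eta>pos by (intro mult_left_mono) auto
        also have "\<dots> \<le> sl t"
          using \<eta>le[OF False] by (simp add: le_divide_eq add_pos_nonneg)
        finally show ?thesis unfolding z'_def sl_def by (simp add: inner_add_right)
      qed
    qed
    have "c \<bullet> z < c \<bullet> z'" unfolding z'_def using cd \<eta>pos by (simp add: inner_add_right)
    moreover have "c \<bullet> z' \<le> c \<bullet> z" using opt fz' by blast
    ultimately show ?thesis by simp
  qed
qed

definition findep :: "('t \<Rightarrow> 'v::real_vector) \<Rightarrow> 't set \<Rightarrow> bool" where
  "findep g J \<longleftrightarrow> (\<forall>u. (\<Sum>t\<in>J. u t *\<^sub>R g t) = 0 \<longrightarrow> (\<forall>t\<in>J. u t = 0))"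

lemma conic_cara:
  fixes g :: "'t \<Rightarrow> 'v::real_vector"
  assumes "finite J" "\<forall>t\<in>J. 0 < y t" "c = (\<Sum>t\<in>J. y t *\<^sub>R g t)"
  shows "\<exists>R0\<subseteq>J. \<exists>y'. (\<forall>t\<in>R0. 0 < y' t) \<and> c = (\<Sum>t\<in>R0. y' t *\<^sub>R g t) \<and> findep g R0"
  using assms
proof (induction "card J" arbitrary: J y rule: less_induct)
  case less
  show ?case
  proof (cases "findep g J")
    case True
    then show ?thesis using less.prems by blast
  next
    case False
    then obtain u t0 where lam: "(\<Sum>t\<in>J. u t *\<^sub>R g t) = 0" "t0 \<in> J" "u t0 \<noteq> 0"
      unfolding findep_def by blast
    define u' where "u' = (if u t0 > 0 then u else (\<lambda>t. - u t))"
    have l1: "(\<Sum>t\<in>J. u' t *\<^sub>R g t) = 0"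
      unfolding u'_def using lam(1) by (simp add: sum_negf)
    have l2: "u' t0 > 0" unfolding u'_def using lam(3) by simp
    define P where "P = {t\<in>J. u' t > 0}"
    have Pfin: "finite P" unfolding P_def using less.prems(1) by simp
    have Pne: "P \<noteq> {}" unfolding P_def using l2 lam(2) by blast
    define \<theta> where "\<theta> = Min ((\<lambda>t. y t / u' t) ` P)"
    have "\<theta> \<in> (\<lambda>t. y t / u' t) ` P"
      unfolding \<theta>_def using Pfin Pne by (intro Min_in) auto
    then obtain t1 where t1: "t1 \<in> P" "\<theta> = y t1 / u' t1" by auto
    have \<theta>le: "\<theta> \<le> y t / u' t" if "t \<in> P" for t
      unfolding \<theta>_def using Pfin that by (intro Min_le) auto
    define y'' where "y'' t = y t - \<theta> * u' t" for t
    have y''nn: "0 \<le> y'' t" if "t \<in> J" for t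
    proof (cases "u' t > 0")
      case True
      then have "t \<in> P" unfolding P_def using that by simp
      then have "\<theta> \<le> y t / u' t" by (rule \<theta>le)
      then show ?thesis unfolding y''_def using True by (simp add: le_divide_eq)
    next
      case False
      have "\<theta> \<ge> 0" using t1 less.prems(2) P_def by (auto intro!: divide_nonneg_pos)
      then have "\<theta> * u' t \<le> 0" using False by (simp add: mult_nonneg_nonpos)
      moreover have "0 < y t" using less.prems(2) that by blast
      ultimately show ?thesis unfolding y''_def by linarith
    qed
    have y''t1: "y'' t1 = 0" unfolding y''_def t1(2) using t1(1) unfolding P_def by simp
    define J' where "J' = {t\<in>J. 0 < y'' t}"
    have J'sub: "J' \<subseteq> J" unfolding J'_def by auto
    have t1J: "t1 \<in> J" using t1(1) unfolding P_def by simp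
    have J'lt: "card J' < card J"
    proof (rule psubset_card_mono[OF less.prems(1)])
      have "t1 \<notin> J'" using y''t1 unfolding J'_def by simp
      then show "J' \<subset> J" using J'sub t1J by blast
    qed
    have "c = (\<Sum>t\<in>J. y'' t *\<^sub>R g t)"
    proof -
      have "(\<Sum>t\<in>J. y'' t *\<^sub>R g t) = (\<Sum>t\<in>J. y t *\<^sub>R g t) - \<theta> *\<^sub>R (\<Sum>t\<in>J. u' t *\<^sub>R g t)"
        unfolding y''_def by (simp add: scaleR_diff_left sum_subtractf scaleR_sum_right)
      then show ?thesis using l1 less.prems(3) by simp
    qed
    also have "\<dots> = (\<Sum>t\<in>J'. y'' t *\<^sub>R g t)"
    proof (rule sum.mono_neutral_right[OF less.prems(1) J'sub])
      show "\<forall>i\<in>J - J'. y'' i *\<^sub>R g i = 0"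
        using y''nn unfolding J'_def by (auto simp: order_le_less)
    qed
    finally have cJ': "c = (\<Sum>t\<in>J'. y'' t *\<^sub>R g t)" .
    have fJ': "finite J'" using finite_subset[OF J'sub less.prems(1)] .
    have pJ': "\<forall>t\<in>J'. 0 < y'' t" unfolding J'_def by simp
    have "\<exists>R0\<subseteq>J'. \<exists>y'. (\<forall>t\<in>R0. 0 < y' t) \<and> c = (\<Sum>t\<in>R0. y' t *\<^sub>R g t) \<and> findep g R0"
      by (rule less.hyps[OF J'lt fJ' pJ' cJ'])
    then show ?thesis using J'sub by blast
  qed
qed

lemma DIM_vec_real: "DIM(real^'n) = CARD('n)" by simp

definition bmat :: "real^'n^'m \<Rightarrow> ('n \<Rightarrow> 'm + 'n) \<Rightarrow> real^'n^'n" where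
  "bmat A R = (\<chi> k. crow A (R k))"
definition bvec :: "real^'m \<Rightarrow> ('n \<Rightarrow> 'm + 'n) \<Rightarrow> real^'n" where
  "bvec b R = (\<chi> k. crhs b (R k))"
definition psol :: "real^'n^'m \<Rightarrow> real^'m \<Rightarrow> ('n \<Rightarrow> 'm + 'n) \<Rightarrow> real^'n" where
  "psol A b R = (\<chi> k. det (\<chi> i l. if l = k then bvec b R $ i else bmat A R $ i $ l) / det (bmat A R))"
definition dsol :: "real^'n^'m \<Rightarrow> real^'n \<Rightarrow> ('n \<Rightarrow> 'm + 'n) \<Rightarrow> real^'n" where
  "dsol A c R = (\<chi> k. det (\<chi> i l. if l = k then c $ i else transpose (bmat A R) $ i $ l) / det (bmat A R))"
definition cert :: "real^'n^'m \<Rightarrow> real^'m \<Rightarrow> real^'n \<Rightarrow> ('n \<Rightarrow> 'm + 'n) \<Rightarrow> bool" where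
  "cert A b c R \<longleftrightarrow> det (bmat A R) \<noteq> 0 \<and> lp_feasible A b (psol A b R) \<and> (\<forall>k. 0 < dsol A c R $ k)"

lemma psol_iff:
  assumes "det (bmat A R) \<noteq> 0"
  shows "bmat A R *v x = bvec b R \<longleftrightarrow> x = psol A b R"
  unfolding psol_def using cramer[OF assms] by simp

lemma dsol_iff:
  assumes "det (bmat A R) \<noteq> 0"
  shows "transpose (bmat A R) *v w = c \<longleftrightarrow> w = dsol A c R"
proof -
  have "det (transpose (bmat A R)) \<noteq> 0" using assms by (simp add: det_transpose)
  then show ?thesis unfolding dsol_def using cramer[of "transpose (bmat A R)" w c] by (simp add: det_transpose)
qed

lemma transpose_inner: "(transpose M *v w) \<bullet> y = w \<bullet> (M *v (y::real^'n))"
proof -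
  have "(transpose M *v w) \<bullet> y = (\<Sum>l\<in>UNIV. \<Sum>k\<in>UNIV. M$k$l * w$k * y$l)"
    by (simp add: inner_vec_def matrix_vector_mult_def transpose_def sum_distrib_right)
  also have "\<dots> = (\<Sum>k\<in>UNIV. \<Sum>l\<in>UNIV. M$k$l * w$k * y$l)" by (rule sum.swap)
  also have "\<dots> = w \<bullet> (M *v y)"
    by (simp add: inner_vec_def matrix_vector_mult_def sum_distrib_left mult_ac)
  finally show ?thesis .
qed

lemma bmat_mv: "(bmat A R *v y) $ k = crow A (R k) \<bullet> y"
  by (simp add: bmat_def mv_inner)

lemma cert_opt:
  assumes c: "cert A b c R" and y: "lp_feasible A b y"
  shows "c \<bullet> y \<le> c \<bullet> psol A b R \<and> (c \<bullet> y = c \<bullet> psol A b R \<longrightarrow> y = psol A b R)"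
proof -
  define M where "M = bmat A R"
  define v where "v = psol A b R"
  define w where "w = dsol A c R"
  have d: "det M \<noteq> 0" using c unfolding cert_def M_def by simp
  have wpos: "\<forall>k. 0 < w $ k" using c unfolding cert_def w_def by simp
  have Mv: "M *v v = bvec b R" unfolding M_def v_def using psol_iff[OF d[unfolded M_def]] by simp
  have Tw: "transpose M *v w = c" unfolding M_def w_def using dsol_iff[OF d[unfolded M_def]] by simp
  have My: "(M *v y) $ k \<le> bvec b R $ k" for k
    using y unfolding feas_iff M_def by (simp add: bmat_mv bvec_def)
  have cy: "c \<bullet> y = (\<Sum>k\<in>UNIV. w $ k * (M *v y) $ k)"
    unfolding Tw[symmetric] transpose_inner by (simp add: inner_vec_def)
  have cv: "c \<bullet> v = (\<Sum>k\<in>UNIV. w $ k * bvec b R $ k)"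
    unfolding Tw[symmetric] transpose_inner Mv by (simp add: inner_vec_def)
  have diff: "c \<bullet> v - c \<bullet> y = (\<Sum>k\<in>UNIV. w $ k * (bvec b R $ k - (M *v y) $ k))"
    unfolding cy cv by (simp add: sum_subtractf right_diff_distrib)
  have nn: "0 \<le> w $ k * (bvec b R $ k - (M *v y) $ k)" for k
    using wpos My[of k] by (simp add: less_imp_le)
  have "0 \<le> (\<Sum>k\<in>UNIV. w $ k * (bvec b R $ k - (M *v y) $ k))" using nn by (simp add: sum_nonneg)
  then have le: "c \<bullet> y \<le> c \<bullet> v" using diff by simp
  moreover have "y = v" if eq: "c \<bullet> y = c \<bullet> v"
  proof -
    have "(\<Sum>k\<in>UNIV. w $ k * (bvec b R $ k - (M *v y) $ k)) = 0" using diff eq by simp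
    then have "\<forall>k\<in>UNIV. w $ k * (bvec b R $ k - (M *v y) $ k) = 0"
      using nn by (subst sum_nonneg_eq_0_iff[symmetric]) auto
    then have "M *v y = bvec b R" using wpos unfolding vec_eq_iff by (metis less_irrefl mult_eq_0_iff right_minus_eq UNIV_I)
    then show ?thesis unfolding M_def v_def using psol_iff[OF d[unfolded M_def]] by simp
  qed
  ultimately show ?thesis unfolding v_def by blast
qed

lemma cert_lp_opt:
  assumes c: "cert A b c R"
  shows "lp_opt A b c = psol A b R"
  unfolding lp_opt_def
proof (rule the_equality)
  show "lp_feasible A b (psol A b R) \<and> (\<forall>y. lp_feasible A b y \<longrightarrow> c \<bullet> y \<le> c \<bullet> psol A b R)"
    using c cert_opt[OF c] unfolding cert_def by blast
next
  fix x assume x: "lp_feasible A b x \<and> (\<forall>y. lp_feasible A b y \<longrightarrow> c \<bullet> y \<le> c \<bullet> x)"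
  have "c \<bullet> psol A b R \<le> c \<bullet> x" using x c unfolding cert_def by blast
  moreover have "c \<bullet> x \<le> c \<bullet> psol A b R" using cert_opt[OF c] x by blast
  ultimately show "x = psol A b R" using cert_opt[OF c] x by (meson order_antisym)
qed

lemma col_le_spec: "norm (column j A) \<le> spec_norm (A::real^'n^'m)"
proof -
  have "norm (A *v axis j 1) \<le> onorm ((*v) A) * norm (axis j (1::real))"
    by (rule onorm[OF matrix_vector_mul_bounded_linear])
  then show ?thesis unfolding spec_norm_def by (simp add: matrix_vector_mult_basis)
qed

lemma det_nz_of_ker:
  fixes N :: "real^'n^'n"
  assumes "\<And>x. N *v x = 0 \<Longrightarrow> x = 0"
  shows "det N \<noteq> 0"
proof -
  have "\<exists>B. B ** N = mat 1" using assms matrix_left_invertible_ker by blast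
  then have "invertible N" using invertible_left_inverse by blast
  then show ?thesis using invertible_det_nz by blast
qed

lemma transpose_mv_sum: "transpose M *v w = (\<Sum>k\<in>UNIV. w $ k *\<^sub>R M $ k)"
  by (simp add: vec_eq_iff matrix_vector_mult_def transpose_def sum_component mult.commute)

definition nset :: "real^'n^'m \<Rightarrow> real^'n \<Rightarrow> ('n \<Rightarrow> 'm + 'n) \<Rightarrow> 'n \<Rightarrow> bool" where
  "nset A c R k0 \<longleftrightarrow> det (bmat A R) \<noteq> 0 \<and> det (\<chi> k. if k = k0 then c else crow A (R k)) = 0"

definition bset :: "real \<Rightarrow> real^'n^'m \<Rightarrow> real^'m \<Rightarrow> real^'n \<Rightarrow> ('n \<Rightarrow> 'm + 'n) \<Rightarrow> 'n \<Rightarrow> bool" where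
  "bset \<epsilon> A b c R j \<longleftrightarrow> cert A b c R \<and> 0 < psol A b R $ j \<and> psol A b R $ j \<le> \<epsilon> / (norm (column j A) + 2)\<^sup>2"

lemma findep_inj:
  assumes "findep g J" "finite J"
  shows "inj_on g J"
proof (rule inj_onI, rule ccontr)
  fix t1 t2 assume t: "t1 \<in> J" "t2 \<in> J" "g t1 = g t2" "t1 \<noteq> t2"
  define u where "u t = (if t = t1 then 1 else if t = t2 then -1 else (0::real))" for t
  have "(\<Sum>t\<in>J. u t *\<^sub>R g t) = (\<Sum>t\<in>{t1,t2}. u t *\<^sub>R g t)"
    using assms(2) t by (intro sum.mono_neutral_right) (auto simp: u_def)
  also have "\<dots> = 0" using t by (simp add: u_def)
  finally have "u t1 = 0" using assms(1) t unfolding findep_def by blast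
  then show False unfolding u_def by simp
qed

lemma findep_indep:
  assumes "findep g J" "finite J"
  shows "independent (g ` J)"
proof
  assume "dependent (g ` J)"
  then obtain u where u: "\<exists>v\<in>g ` J. u v \<noteq> 0" "(\<Sum>v\<in>g ` J. u v *\<^sub>R v) = 0"
    using dependent_finite[of "g ` J"] assms(2) by auto
  have "(\<Sum>t\<in>J. u (g t) *\<^sub>R g t) = 0"
    using u(2) sum.reindex[OF findep_inj[OF assms], of "\<lambda>v. u v *\<^sub>R v"] by simp
  then have "\<forall>t\<in>J. u (g t) = 0" using assms(1)[unfolded findep_def, rule_format, of "\<lambda>t. u (g t)"] by simp
  then show False using u(1) by auto
qed

lemma alpha_event:
  assumes "alpha_P A b c \<le> ereal r"
  shows "\<exists>j. 0 < lp_opt A b c $ j \<and> lp_opt A b c $ j \<le> r"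
proof -
  define x where "x = lp_opt A b c"
  define S where "S = {j. 0 < x $ j}"
  have a: "(INF j\<in>S. ereal (x $ j)) \<le> ereal r" using assms unfolding alpha_P_def x_def S_def .
  show ?thesis
  proof (cases "S = {}")
    case True
    then show ?thesis using a by (simp add: top_ereal_def)
  next
    case False
    have fin: "finite ((\<lambda>j. x $ j) ` S)" by simp
    have "Min ((\<lambda>j. x $ j) ` S) \<in> (\<lambda>j. x $ j) ` S" using fin False by (intro Min_in) auto
    then obtain j0 where j0: "j0 \<in> S" "x $ j0 = Min ((\<lambda>j. x $ j) ` S)" by auto
    have "ereal (x $ j0) \<le> (INF j\<in>S. ereal (x $ j))"
    proof (rule INF_greatest)
      fix j assume "j \<in> S"
      then show "ereal (x $ j0) \<le> ereal (x $ j)" unfolding j0(2) using fin by (simp add: Min_le)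
    qed
    then have "ereal (x $ j0) \<le> ereal r" using a by (rule order_trans)
    then have "x $ j0 \<le> r" by simp
    then show ?thesis using j0(1) unfolding S_def x_def by auto
  qed
qed

lemma span_range_crow: "span (range (crow (A::real^'n^'m))) = UNIV"
proof -
  have "x \<in> span (range (crow A))" for x :: "real^'n"
  proof -
    have "x = (\<Sum>k\<in>UNIV. (- x $ k) *\<^sub>R crow A (Inr k))"
      using vec_expand[of x] by (simp add: crow_def)
    also have "\<dots> \<in> span (range (crow A))"
      by (intro span_sum span_scale span_base) auto
    finally show ?thesis .
  qed
  then show ?thesis by auto
qed

lemma det_nz_family:
  fixes M :: "real^'n^'n"
  assumes "\<And>w. (\<Sum>k\<in>UNIV. w $ k *\<^sub>R M $ k) = 0 \<Longrightarrow> w = 0"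
  shows "det M \<noteq> 0"
proof -
  have "det (transpose M) \<noteq> 0"
  proof (rule det_nz_of_ker)
    fix x assume "transpose M *v x = 0"
    then have "(\<Sum>k\<in>UNIV. x $ k *\<^sub>R M $ k) = 0" by (simp only: transpose_mv_sum)
    then show "x = 0" by (rule assms)
  qed
  then show ?thesis by (simp add: det_transpose)
qed

lemma cover:
  fixes A :: "real^'n^'m" and b :: "real^'m" and c :: "real^'n"
  assumes F: "lp_feasible_bounded A b c" and \<epsilon>: "0 < \<epsilon>"
    and ev: "alpha_P A b c \<le> ereal (\<epsilon> / ((spec_norm A + 2)\<^sup>2 * (norm (lp_opt A b c) + 1)))"
  shows "(\<exists>R k0. nset A c R k0) \<or> (\<exists>R j. bset \<epsilon> A b c R j)"
proof -
  obtain z where z: "lp_feasible A b z" "\<forall>y. lp_feasible A b y \<longrightarrow> c \<bullet> y \<le> c \<bullet> z"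
    using lp_attain[OF F] by blast
  obtain \<mu> where mu: "\<forall>t. 0 \<le> \<mu> t" "\<forall>t. \<mu> t \<noteq> 0 \<longrightarrow> crow A t \<bullet> z = crhs b t"
    "c = (\<Sum>t\<in>UNIV. \<mu> t *\<^sub>R crow A t)"
    using kkt[OF z] by blast
  define J where "J = {t. 0 < \<mu> t}"
  have cJ: "c = (\<Sum>t\<in>J. \<mu> t *\<^sub>R crow A t)"
    unfolding mu(3) J_def
    by (rule sum.mono_neutral_right) (use mu(1) in \<open>auto simp: order_le_less\<close>)
  have fJ: "finite J" by simp
  have pJ: "\<forall>t\<in>J. 0 < \<mu> t" unfolding J_def by simp
  have "\<exists>R0\<subseteq>J. \<exists>y'. (\<forall>t\<in>R0. 0 < y' t) \<and> c = (\<Sum>t\<in>R0. y' t *\<^sub>R crow A t) \<and> findep (crow A) R0"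
    by (rule conic_cara[OF fJ pJ cJ])
  then obtain R0 y' where R0: "R0 \<subseteq> J" "\<forall>t\<in>R0. 0 < y' t" "c = (\<Sum>t\<in>R0. y' t *\<^sub>R crow A t)"
    "findep (crow A) R0" by blast
  have finR0: "finite R0" by simp
  have tight: "crow A t \<bullet> z = crhs b t" if "t \<in> R0" for t
    using that R0(1) mu(2) unfolding J_def by force
  have inj0: "inj_on (crow A) R0" by (rule findep_inj[OF R0(4) finR0])
  have ind0: "independent (crow A ` R0)" by (rule findep_indep[OF R0(4) finR0])
  have cardV0: "card (crow A ` R0) = card R0" using card_image[OF inj0] .
  have cle: "card R0 \<le> CARD('n)" using independent_bound[OF ind0] cardV0 by simp
  show ?thesis
  proof (cases "card R0 = CARD('n)")
    case True
    obtain \<beta> where \<beta>: "bij_betw \<beta> (UNIV::'n set) R0"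
      using finite_same_card_bij[of "UNIV::'n set" R0] True by auto
    have \<beta>in: "\<beta> k \<in> R0" for k using \<beta> unfolding bij_betw_def by auto
    define M where "M = bmat A \<beta>"
    have Mrow: "M $ k = crow A (\<beta> k)" for k unfolding M_def bmat_def by simp
    have reidx: "(\<Sum>k\<in>UNIV. f (\<beta> k)) = (\<Sum>t\<in>R0. f t)" for f :: "_ \<Rightarrow> real^'n"
      using sum.reindex_bij_betw[OF \<beta>] .
    have dM: "det M \<noteq> 0"
    proof (rule det_nz_family)
      fix w :: "real^'n" assume w: "(\<Sum>k\<in>UNIV. w $ k *\<^sub>R M $ k) = 0"
      define u where "u t = w $ (inv_into UNIV \<beta> t)" for t
      have ub: "u (\<beta> k) = w $ k" for k unfolding u_def using bij_betw_inv_into_left[OF \<beta>] by simp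
      have "(\<Sum>t\<in>R0. u t *\<^sub>R crow A t) = 0"
        using w unfolding Mrow reidx[of "\<lambda>t. u t *\<^sub>R crow A t", symmetric] ub .
      then have "\<forall>t\<in>R0. u t = 0" using R0(4)[unfolded findep_def, rule_format, of u] by simp
      then show "w = 0" using \<beta>in ub by (simp add: vec_eq_iff)
    qed
    have Mz: "M *v z = bvec b \<beta>"
      unfolding M_def by (simp add: vec_eq_iff bmat_mv bvec_def tight[OF \<beta>in])
    have zp: "z = psol A b \<beta>" using psol_iff[OF dM[unfolded M_def]] Mz unfolding M_def by simp
    have "transpose M *v (\<chi> k. y' (\<beta> k)) = c"
      unfolding transpose_mv_sum Mrow R0(3) using reidx[of "\<lambda>t. y' t *\<^sub>R crow A t"] by simp
    then have dsol: "dsol A c \<beta> = (\<chi> k. y' (\<beta> k))"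
      using dsol_iff[OF dM[unfolded M_def]] unfolding M_def by simp
    have cert: "cert A b c \<beta>"
      unfolding cert_def using dM z(1) R0(2) \<beta>in by (simp add: M_def zp[symmetric] dsol)
    have opt: "lp_opt A b c = z" using cert_lp_opt[OF cert] zp by simp
    obtain j where j: "0 < z $ j" "z $ j \<le> \<epsilon> / ((spec_norm A + 2)\<^sup>2 * (norm z + 1))"
      using alpha_event[OF ev] unfolding opt by blast
    have "\<epsilon> / ((spec_norm A + 2)\<^sup>2 * (norm z + 1)) \<le> \<epsilon> / (norm (column j A) + 2)\<^sup>2"
    proof -
      have s0: "0 \<le> norm (column j A)" by simp
      have "(norm (column j A) + 2)\<^sup>2 \<le> (spec_norm A + 2)\<^sup>2"
        using col_le_spec[of j A] s0 by (intro power_mono) auto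
      also have "\<dots> \<le> (spec_norm A + 2)\<^sup>2 * (norm z + 1)" using mult_left_mono[of 1 "norm z + 1" "(spec_norm A + 2)\<^sup>2"] by simp
      finally have le: "(norm (column j A) + 2)\<^sup>2 \<le> (spec_norm A + 2)\<^sup>2 * (norm z + 1)" .
      have p1: "0 < norm (column j A) + 2" using s0 by linarith
      have p2: "0 < norm z + 1" using norm_ge_zero[of z] by linarith
      have p3: "0 < spec_norm A + 2" using col_le_spec[of j A] s0 by linarith
      have "0 < (spec_norm A + 2)\<^sup>2 * (norm z + 1) * (norm (column j A) + 2)\<^sup>2"
        using p1 p2 p3 by simp
      then show ?thesis using le \<epsilon> by (intro divide_left_mono) auto
    qed
    then have "bset \<epsilon> A b c \<beta> j" unfolding bset_def using cert j zp by simp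
    then show ?thesis by blast
  next
    case False
    then have lt: "card R0 < CARD('n)" using cle by simp
    define V0 where "V0 = crow A ` R0"
    obtain Bs where Bs: "V0 \<subseteq> Bs" "Bs \<subseteq> range (crow A)" "independent Bs" "range (crow A) \<subseteq> span Bs"
      using maximal_independent_subset_extend[of V0 "range (crow A)"] ind0 unfolding V0_def by auto
    have spanB: "span Bs = UNIV"
      using span_mono[OF Bs(4)] span_range_crow[of A] by (auto simp: span_span)
    have finB: "finite Bs" using independent_bound[OF Bs(3)] by simp
    have cardB: "card Bs = CARD('n)"
      using dim_span_eq_card_independent[OF Bs(3)] spanB dim_UNIV by simp
    have "card V0 < card Bs" unfolding V0_def cardV0 cardB using lt .
    moreover have "finite V0" unfolding V0_def by simp
    ultimately have "\<not> Bs \<subseteq> V0" using card_mono[of V0 Bs] by auto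
    then obtain u0 where u0: "u0 \<in> Bs" "u0 \<notin> V0" by blast
    obtain \<beta> where \<beta>: "bij_betw \<beta> (UNIV::'n set) Bs"
      using finite_same_card_bij[of "UNIV::'n set" Bs] finB cardB by auto
    have \<beta>in: "\<beta> k \<in> Bs" for k using \<beta> unfolding bij_betw_def by auto
    have "u0 \<in> \<beta> ` UNIV" using \<beta> u0(1) by (simp add: bij_betw_def)
    then obtain k0 where k0: "\<beta> k0 = u0" by blast
    define R where "R k = (SOME t. crow A t = \<beta> k)" for k
    have cR: "crow A (R k) = \<beta> k" for k
    proof -
      have "\<beta> k \<in> range (crow A)" using Bs(2) \<beta>in[of k] by blast
      then have "\<exists>t. crow A t = \<beta> k" by (metis rangeE)
      then show ?thesis unfolding R_def by (rule someI_ex)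
    qed
    define M where "M = bmat A R"
    have Mrow: "M $ k = \<beta> k" for k unfolding M_def bmat_def by (simp add: cR)
    have reidx: "(\<Sum>k\<in>UNIV. f (\<beta> k)) = (\<Sum>t\<in>Bs. f t)" for f :: "_ \<Rightarrow> real^'n"
      using sum.reindex_bij_betw[OF \<beta>] .
    have dM: "det M \<noteq> 0"
    proof (rule det_nz_family)
      fix w :: "real^'n" assume w: "(\<Sum>k\<in>UNIV. w $ k *\<^sub>R M $ k) = 0"
      define u where "u t = w $ (inv_into UNIV \<beta> t)" for t
      have ub: "u (\<beta> k) = w $ k" for k unfolding u_def using bij_betw_inv_into_left[OF \<beta>] by simp
      have "(\<Sum>t\<in>Bs. u t *\<^sub>R t) = 0"
        using w unfolding Mrow reidx[of "\<lambda>t. u t *\<^sub>R t", symmetric] ub .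
      then have "\<forall>t\<in>Bs. u t = 0" using Bs(3) finB dependent_finite[of Bs] by blast
      then show "w = 0" using \<beta>in ub by (simp add: vec_eq_iff)
    qed
    define M'' :: "real^'n^'n" where "M'' = (\<chi> k. if k = k0 then 0 else \<beta> k)"
    have rowM: "row k M'' = (if k = k0 then 0 else \<beta> k)" for k
      unfolding M''_def by (simp add: row_def vec_eq_iff)
    have dM'': "det M'' = 0" by (rule det_zero_row(1)[of k0]) (simp add: rowM)
    have V0sub: "V0 \<subseteq> {row j M'' | j. j \<noteq> k0}"
    proof
      fix v assume v: "v \<in> V0"
      then have "v \<in> Bs" using Bs(1) by auto
      then obtain j where j: "\<beta> j = v" using \<beta> unfolding bij_betw_def by auto
      have "j \<noteq> k0" using j k0 u0(2) v by auto
      then show "v \<in> {row j M'' | j. j \<noteq> k0}" using j rowM by auto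
    qed
    have cspan: "c \<in> span V0"
      unfolding R0(3) V0_def by (intro span_sum span_scale span_base) auto
    have "c \<in> vec.span {row j M'' | j. j \<noteq> k0}"
      unfolding span_vec_eq using span_mono[OF V0sub] cspan by auto
    then have "det (\<chi> k. if k = k0 then row k0 M'' + c else row k M'') = det M''"
      by (rule det_row_span)
    moreover have "(\<chi> k. if k = k0 then row k0 M'' + c else row k M'') = (\<chi> k. if k = k0 then c else crow A (R k))"
      by (simp add: rowM cR vec_eq_iff)
    ultimately have "det (\<chi> k. if k = k0 then c else crow A (R k)) = 0" using dM'' by simp
    then have "nset A c R k0" unfolding nset_def using dM M_def by simp
    then show ?thesis by blast
  qed
qed

lemma mv_lin: "(A::real^'n^'m) *v (u *\<^sub>R x + v *\<^sub>R y) = u *\<^sub>R (A *v x) + v *\<^sub>R (A *v y)"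
  by (simp add: matrix_vector_right_distrib matrix_vector_mult_scaleR)

lemma line_thin:
  fixes A :: "real^'n^'m" and b :: "real^'m" and c :: "real^'n" and j :: 'n
  defines "a \<equiv> column j A"
  assumes B1: "bset \<epsilon> A (b + s1 *\<^sub>R a) c R1 j" and B2: "bset \<epsilon> A (b + s2 *\<^sub>R a) c R2 j"
    and s: "s1 < s2"
  shows "s2 - s1 \<le> \<epsilon> / (norm a + 2)\<^sup>2"
proof (rule ccontr)
  define \<delta> where "\<delta> = \<epsilon> / (norm a + 2)\<^sup>2"
  define d where "d = s2 - s1"
  assume "\<not> s2 - s1 \<le> \<epsilon> / (norm a + 2)\<^sup>2"
  then have dd: "\<delta> < d" unfolding \<delta>_def d_def by simp
  define b1 where "b1 = b + s1 *\<^sub>R a"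
  define b2 where "b2 = b + s2 *\<^sub>R a"
  have b2b1: "b2 = b1 + d *\<^sub>R a" unfolding b1_def b2_def d_def by (simp add: algebra_simps)
  define x1 where "x1 = psol A b1 R1"
  define q where "q = psol A b2 R2"
  have c1: "cert A b1 c R1" and x1j: "0 < x1 $ j" using B1 unfolding bset_def b1_def x1_def a_def by auto
  have c2: "cert A b2 c R2" and qj: "q $ j \<le> \<delta>" using B2 unfolding bset_def b2_def q_def a_def \<delta>_def by auto
  have fx1: "lp_feasible A b1 x1" using c1 unfolding cert_def x1_def by simp
  have ox1: "\<And>y. lp_feasible A b1 y \<Longrightarrow> c \<bullet> y \<le> c \<bullet> x1" using cert_opt[OF c1] unfolding x1_def by blast
  have fq: "lp_feasible A b2 q" using c2 unfolding cert_def q_def by simp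
  have oq: "\<And>y. lp_feasible A b2 y \<Longrightarrow> c \<bullet> y \<le> c \<bullet> q \<and> (c \<bullet> y = c \<bullet> q \<longrightarrow> y = q)"
    using cert_opt[OF c2] unfolding q_def by blast
  have d0: "0 < d" unfolding d_def using s by simp
  have Aa: "A *v axis j 1 = a" unfolding a_def by (rule matrix_vector_mult_basis)
  define e where "e = (axis j 1 :: real^'n)"
  define p where "p = x1 + d *\<^sub>R e"
  have fp: "lp_feasible A b2 p"
    unfolding lp_feasible_def
  proof (intro conjI allI)
    fix k show "0 \<le> p $ k" using fx1 d0 unfolding p_def e_def lp_feasible_def by (simp add: axis_def)
  next
    fix i
    have "A *v p = A *v x1 + d *\<^sub>R a" unfolding p_def e_def using mv_lin[of A 1 x1 d "axis j 1"] Aa by simp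
    then show "(A *v p) $ i \<le> b2 $ i" using fx1 unfolding lp_feasible_def b2b1 by simp
  qed
  have pj: "p $ j = x1 $ j + d" unfolding p_def e_def by simp
  have "p \<noteq> q" using pj qj dd x1j by auto
  then have cpq: "c \<bullet> p < c \<bullet> q" using oq[OF fp] by fastforce
  have cp: "c \<bullet> p = c \<bullet> x1 + d * c $ j" unfolding p_def e_def by (simp add: inner_add_right inner_axis)
  have den: "0 < x1 $ j + d - q $ j" using x1j dd qj by simp
  define \<theta> where "\<theta> = x1 $ j / (x1 $ j + d - q $ j)"
  have \<theta>0: "0 < \<theta>" unfolding \<theta>_def using x1j den by simp
  have \<theta>1: "\<theta> \<le> 1" unfolding \<theta>_def using den dd qj x1j by (simp add: divide_le_eq_1)
  define r where "r = \<theta> *\<^sub>R q + (1 - \<theta>) *\<^sub>R p - d *\<^sub>R e"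
  have rj: "r $ j = 0"
  proof -
    have "r $ j = \<theta> * q $ j + (1 - \<theta>) * (x1 $ j + d) - d" unfolding r_def e_def pj[symmetric] by simp
    also have "\<dots> = x1 $ j - \<theta> * (x1 $ j + d - q $ j)" by (simp add: algebra_simps)
    also have "\<theta> * (x1 $ j + d - q $ j) = x1 $ j" unfolding \<theta>_def using den by simp
    finally show ?thesis by simp
  qed
  have fr: "lp_feasible A b1 r"
    unfolding lp_feasible_def
  proof (intro conjI allI)
    fix k
    show "0 \<le> r $ k"
    proof (cases "k = j")
      case True then show ?thesis using rj by simp
    next
      case False
      have "r $ k = \<theta> * q $ k + (1 - \<theta>) * p $ k" unfolding r_def e_def using False by (simp add: axis_def)
      moreover have "0 \<le> q $ k" "0 \<le> p $ k" using fq fp unfolding lp_feasible_def by auto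
      ultimately show ?thesis using \<theta>0 \<theta>1 by simp
    qed
  next
    fix i
    have Ar: "A *v r = \<theta> *\<^sub>R (A *v q) + (1 - \<theta>) *\<^sub>R (A *v p) - d *\<^sub>R a"
      unfolding r_def e_def by (simp add: matrix_vector_right_distrib matrix_vector_mult_scaleR
          matrix_vector_mult_diff_distrib Aa)
    have "(A *v q) $ i \<le> b2 $ i" "(A *v p) $ i \<le> b2 $ i" using fq fp unfolding lp_feasible_def by auto
    then have "\<theta> * (A *v q) $ i + (1 - \<theta>) * (A *v p) $ i \<le> \<theta> * b2 $ i + (1 - \<theta>) * b2 $ i"
      using \<theta>0 \<theta>1 by (intro add_mono mult_left_mono) auto
    then show "(A *v r) $ i \<le> b1 $ i" unfolding Ar b2b1 by (simp add: algebra_simps)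
  qed
  have "c \<bullet> r = \<theta> * (c \<bullet> q - c \<bullet> p) + c \<bullet> x1"
    unfolding r_def e_def using cp by (simp add: inner_add_right inner_diff_right inner_axis algebra_simps)
  then have "c \<bullet> x1 < c \<bullet> r" using \<theta>0 cpq by simp
  then show False using ox1[OF fr] by simp
qed

lemma det_cont:
  fixes F :: "'x::topological_space \<Rightarrow> real^'n^'n"
  assumes "\<And>i j. continuous_on UNIV (\<lambda>x. F x $ i $ j)"
  shows "continuous_on UNIV (\<lambda>x. det (F x))"
  unfolding det_def by (intro continuous_intros assms)

lemma crow_cont:
  fixes f :: "'x::topological_space \<Rightarrow> real^'n^'m"
  assumes "continuous_on UNIV f"
  shows "continuous_on UNIV (\<lambda>x. crow (f x) t $ l)"
  by (cases t) (auto simp: crow_def intro!: continuous_intros assms)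

lemma crhs_cont:
  fixes f :: "'x::topological_space \<Rightarrow> real^'m"
  assumes "continuous_on UNIV f"
  shows "continuous_on UNIV (\<lambda>x. crhs (f x) (t :: 'm + 'n))"
  by (cases t) (auto simp: crhs_def intro!: continuous_intros assms)

abbreviation dA where "dA x \<equiv> fst x"
abbreviation db where "db x \<equiv> fst (snd x)"
abbreviation dc where "dc x \<equiv> snd (snd x)"

lemma cA: "continuous_on UNIV (\<lambda>x::(real^'n^'m) \<times> (real^'m) \<times> (real^'n). dA x)" by (intro continuous_intros)
lemma cb: "continuous_on UNIV (\<lambda>x::(real^'n^'m) \<times> (real^'m) \<times> (real^'n). db x)" by (intro continuous_intros)
lemma cc: "continuous_on UNIV (\<lambda>x::(real^'n^'m) \<times> (real^'m) \<times> (real^'n). dc x)" by (intro continuous_intros)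

lemma meas_detM[measurable]: "(\<lambda>x::(real^'n^'m) \<times> (real^'m) \<times> (real^'n). det (bmat (dA x) R)) \<in> borel_measurable borel"
  by (intro borel_measurable_continuous_onI det_cont) (simp add: bmat_def crow_cont[OF cA])

lemma meas_psol[measurable]: "(\<lambda>x::(real^'n^'m) \<times> (real^'m) \<times> (real^'n). psol (dA x) (db x) R $ k) \<in> borel_measurable borel"
proof -
  have "(\<lambda>x::(real^'n^'m) \<times> (real^'m) \<times> (real^'n). det (\<chi> i l. if l = k then bvec (db x) R $ i else bmat (dA x) R $ i $ l)) \<in> borel_measurable borel"
    apply (intro borel_measurable_continuous_onI det_cont)
    subgoal for i l by (cases "l = k") (auto simp: bmat_def bvec_def intro!: continuous_intros crow_cont[OF cA] crhs_cont[OF cb])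
    done
  then show ?thesis unfolding psol_def by simp
qed

lemma meas_dsol[measurable]: "(\<lambda>x::(real^'n^'m) \<times> (real^'m) \<times> (real^'n). dsol (dA x) (dc x) R $ k) \<in> borel_measurable borel"
proof -
  have "(\<lambda>x::(real^'n^'m) \<times> (real^'m) \<times> (real^'n). det (\<chi> i l. if l = k then dc x $ i else transpose (bmat (dA x) R) $ i $ l)) \<in> borel_measurable borel"
    apply (intro borel_measurable_continuous_onI det_cont)
    subgoal for i l by (cases "l = k") (auto simp: bmat_def transpose_def intro!: continuous_intros crow_cont[OF cA] cc)
    done
  then show ?thesis unfolding dsol_def by simp
qed

lemma meas_nc[measurable]: "(\<lambda>x::(real^'n^'m) \<times> (real^'m) \<times> (real^'n). det (\<chi> k. if k = k0 then dc x else crow (dA x) (R k))) \<in> borel_measurable borel"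
  apply (intro borel_measurable_continuous_onI det_cont)
  subgoal for i l by (cases "i = k0") (auto intro!: continuous_intros crow_cont[OF cA] cc)
  done

lemma meas_Aij[measurable]: "(\<lambda>x::(real^'n^'m) \<times> (real^'m) \<times> (real^'n). dA x $ i $ j) \<in> borel_measurable borel"
  by (intro borel_measurable_continuous_onI continuous_intros)
lemma meas_bi[measurable]: "(\<lambda>x::(real^'n^'m) \<times> (real^'m) \<times> (real^'n). db x $ i) \<in> borel_measurable borel"
  by (intro borel_measurable_continuous_onI continuous_intros)
lemma meas_col[measurable]: "(\<lambda>x::(real^'n^'m) \<times> (real^'m) \<times> (real^'n). norm (column j (dA x))) \<in> borel_measurable borel"
  by (intro borel_measurable_continuous_onI) (auto simp: column_def intro!: continuous_intros)

lemma sets_feas[measurable]: "{x::(real^'n^'m) \<times> (real^'m) \<times> (real^'n) \<in> space borel. lp_feasible (dA x) (db x) (psol (dA x) (db x) R)} \<in> sets borel"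
proof -
  have "{x::(real^'n^'m) \<times> (real^'m) \<times> (real^'n) \<in> space borel. (\<forall>j. 0 \<le> psol (dA x) (db x) R $ j) \<and>
      (\<forall>i. (\<Sum>l\<in>UNIV. dA x $ i $ l * psol (dA x) (db x) R $ l) \<le> db x $ i)} \<in> sets borel"
    by measurable
  then show ?thesis unfolding lp_feasible_def matrix_vector_mult_def by simp
qed

lemma sets_cert[measurable]: "{x::(real^'n^'m) \<times> (real^'m) \<times> (real^'n) \<in> space borel. cert (dA x) (db x) (dc x) R} \<in> sets borel"
  unfolding cert_def by measurable

lemma sets_bset[measurable]: "{x::(real^'n^'m) \<times> (real^'m) \<times> (real^'n) \<in> space borel. bset \<epsilon> (dA x) (db x) (dc x) R j} \<in> sets borel"
  unfolding bset_def by measurable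

lemma sets_nset[measurable]: "{x::(real^'n^'m) \<times> (real^'m) \<times> (real^'n) \<in> space borel. nset (dA x) (dc x) R k0} \<in> sets borel"
  unfolding nset_def by measurable

lemma hyper_null:
  fixes w :: "real^'n"
  assumes "w \<noteq> 0"
  shows "{c. w \<bullet> c = 0} \<in> null_sets lborel"
proof -
  have n: "negligible {c. w \<bullet> c = 0}" using negligible_hyperplane[of w 0] assms by simp
  have s: "{c. w \<bullet> c = 0} \<in> sets lborel"
  proof -
    have "closed {c. w \<bullet> c = 0}" by (intro closed_Collect_eq continuous_intros)
    then show ?thesis by simp
  qed
  show ?thesis using n s negligible_iff_null_sets null_sets_completion_iff by blast
qed

lemma det_row_linear:
  fixes r :: "'n \<Rightarrow> real^'n" and c :: "real^'n"
  shows "det (\<chi> k. if k = k0 then c else r k) = (\<Sum>l\<in>UNIV. c $ l * det (\<chi> k. if k = k0 then axis l 1 else r k))"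
proof -
  have "det (\<chi> k. if k = k0 then c else r k) = det (\<chi> k. if k = k0 then (\<Sum>l\<in>UNIV. c $ l *s axis l 1) else r k)"
    by (simp only: basis_expansion)
  also have "\<dots> = (\<Sum>l\<in>UNIV. det (\<chi> k. if k = k0 then c $ l *s axis l 1 else r k))"
    by (rule det_linear_row_sum) simp
  also have "\<dots> = (\<Sum>l\<in>UNIV. c $ l * det (\<chi> k. if k = k0 then axis l 1 else r k))"
    by (simp add: det_row_mul)
  finally show ?thesis .
qed

lemma nset_null:
  fixes A :: "real^'n^'m"
  shows "{c. \<exists>R k0. nset A c R k0} \<in> null_sets lborel"
proof -
  define W where "W R k0 = (\<chi> l. det (\<chi> k. if k = k0 then axis l 1 else crow A (R k)))" for R k0
  have key: "det (\<chi> k. if k = k0 then c else crow A (R k)) = W R k0 \<bullet> c" for c R k0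
    unfolding W_def det_row_linear[of k0 c "\<lambda>k. crow A (R k)"] inner_vec_def by (simp add: mult.commute)
  have eq: "{c. \<exists>R k0. nset A c R k0} = (\<Union>R\<in>{R. det (bmat A R) \<noteq> 0}. \<Union>k0\<in>UNIV. {c. W R k0 \<bullet> c = 0})"
    by (rule set_eqI) (simp add: nset_def key)
  show ?thesis unfolding eq
  proof (intro null_sets.finite_UN ballI)
    fix R k0 assume R: "R \<in> {R. det (bmat A R) \<noteq> 0}"
    have "W R k0 \<noteq> 0"
    proof
      assume w0: "W R k0 = 0"
      have "(\<chi> k. if k = k0 then crow A (R k0) else crow A (R k)) = bmat A R"
        unfolding bmat_def by (simp add: vec_eq_iff)
      then have "det (bmat A R) = det (\<chi> k. if k = k0 then crow A (R k0) else crow A (R k))" by simp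
      also have "\<dots> = W R k0 \<bullet> crow A (R k0)" by (rule key)
      also have "\<dots> = 0" using w0 by simp
      finally show False using R by simp
    qed
    then show "{c. W R k0 \<bullet> c = 0} \<in> null_sets lborel" by (rule hyper_null)
  qed auto
qed

lemma diam_measure:
  fixes X :: "real set"
  assumes d: "\<And>s1 s2. s1 \<in> X \<Longrightarrow> s2 \<in> X \<Longrightarrow> s1 < s2 \<Longrightarrow> s2 - s1 \<le> \<delta>" and \<delta>: "0 \<le> \<delta>"
  shows "emeasure lborel X \<le> ennreal \<delta>"
proof (cases "X = {}")
  case True then show ?thesis by simp
next
  case False
  then obtain x0 where x0: "x0 \<in> X" by auto
  have bdd: "bdd_below X"
  proof
    fix s assume "s \<in> X"
    show "x0 - \<delta> \<le> s"
    proof (cases "s < x0")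
      case True then show ?thesis using d[OF \<open>s \<in> X\<close> x0] by simp
    next
      case False then show ?thesis using \<delta> by simp
    qed
  qed
  define a where "a = Inf X"
  have sub: "X \<subseteq> {a..a + \<delta>}"
  proof
    fix s assume s: "s \<in> X"
    have "a \<le> s" unfolding a_def using bdd s by (rule cInf_lower[rotated])
    moreover have "s - \<delta> \<le> a" unfolding a_def
    proof (rule cInf_greatest[OF False])
      fix s' assume s': "s' \<in> X"
      show "s - \<delta> \<le> s'"
      proof (cases "s' < s")
        case True then show ?thesis using d[OF s' s] by simp
      next
        case False then show ?thesis using \<delta> by simp
      qed
    qed
    ultimately show "s \<in> {a..a + \<delta>}" by simp
  qed
  have "emeasure lborel X \<le> emeasure lborel {a..a + \<delta>}" by (rule emeasure_mono[OF sub]) simp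
  also have "\<dots> = ennreal \<delta>" using \<delta> by simp
  finally show ?thesis .
qed

lemma slice_bound:
  fixes A :: "real^'n^'m" and c :: "real^'n" and j :: 'n and \<epsilon> \<sigma> :: real and bbar :: "real^'m"
  defines "E \<equiv> {b. \<exists>R. bset \<epsilon> A b c R j}"
  assumes \<sigma>: "0 < \<sigma>" and \<epsilon>: "0 < \<epsilon>"
  shows "(\<integral>\<^sup>+b. ennreal (\<Prod>i\<in>UNIV. normal_density (bbar$i) \<sigma> (b$i)) * indicator E b \<partial>lborel)
          \<le> ennreal (\<epsilon> * sqrt (real CARD('m)) / (8 * \<sigma>))"
proof -
  define v where "v = column j A"
  define \<delta> where "\<delta> = \<epsilon> / (norm v + 2)\<^sup>2"
  have \<delta>0: "0 \<le> \<delta>" unfolding \<delta>_def using \<epsilon> by simp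
  have thin: "s2 - s1 \<le> \<delta>" if h1: "b + s1 *\<^sub>R v \<in> E" and h2: "b + s2 *\<^sub>R v \<in> E" and h3: "s1 < s2" for b s1 s2
  proof -
    obtain R1 where "bset \<epsilon> A (b + s1 *\<^sub>R column j A) c R1 j" using h1 unfolding E_def v_def by auto
    moreover obtain R2 where "bset \<epsilon> A (b + s2 *\<^sub>R column j A) c R2 j" using h2 unfolding E_def v_def by auto
    ultimately show ?thesis unfolding \<delta>_def v_def using line_thin h3 by blast
  qed
  show ?thesis
  proof (cases "v = 0")
    case True
    have "E = {}"
    proof (rule ccontr)
      assume "E \<noteq> {}"
      then obtain b where b: "b \<in> E" by auto
      have "(\<delta> + 1) - 0 \<le> \<delta>" using thin[of b 0 "\<delta> + 1"] b True \<delta>0 by simp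
      then show False by simp
    qed
    then show ?thesis by simp
  next
    case False
    have Em: "E \<in> sets borel"
    proof -
      have "{x::(real^'n^'m) \<times> (real^'m) \<times> (real^'n) \<in> space borel. \<exists>R. bset \<epsilon> (dA x) (db x) (dc x) R j} \<in> sets borel"
        by measurable
      then have "(\<lambda>b. (A, b, c)) -` {x::(real^'n^'m) \<times> (real^'m) \<times> (real^'n) \<in> space borel. \<exists>R. bset \<epsilon> (dA x) (db x) (dc x) R j} \<inter> space borel \<in> sets borel"
        by (rule measurable_sets[rotated]) (intro borel_measurable_continuous_onI continuous_intros)
      then show ?thesis unfolding E_def by (simp add: vimage_def)
    qed
    have sl: "emeasure lborel {s. b + s *\<^sub>R v \<in> E} \<le> ennreal \<delta>" for b
      by (rule diam_measure[OF _ \<delta>0]) (auto intro: thin)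
    have "(\<integral>\<^sup>+b. ennreal (\<Prod>i\<in>UNIV. normal_density (bbar$i) \<sigma> (b$i)) * indicator E b \<partial>lborel)
        \<le> ennreal (\<delta> * norm v * sqrt (real CARD('m)) / \<sigma>)"
      by (rule gauss_line_bound[OF \<sigma> False Em \<delta>0 sl])
    also have "\<dots> \<le> ennreal (\<epsilon> * sqrt (real CARD('m)) / (8 * \<sigma>))"
    proof (rule ennreal_leI)
      have nv: "0 \<le> norm v" by simp
      have "\<delta> * norm v = \<epsilon> * (norm v / (norm v + 2)\<^sup>2)" unfolding \<delta>_def by simp
      also have "norm v / (norm v + 2)\<^sup>2 \<le> 1 / 8"
      proof -
        have "8 * norm v \<le> (norm v + 2)\<^sup>2"
        proof -
          have h: "0 \<le> (norm v - 2)\<^sup>2" by simp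
          have "(norm v + 2)\<^sup>2 - 8 * norm v = (norm v - 2)\<^sup>2" by (simp add: power2_eq_square algebra_simps)
          then show ?thesis using h by linarith
        qed
        then show ?thesis using nv by (simp add: divide_le_eq field_simps)
      qed
      then have "\<epsilon> * (norm v / (norm v + 2)\<^sup>2) \<le> \<epsilon> * (1/8)" using \<epsilon> by (intro mult_left_mono) auto
      finally have "\<delta> * norm v \<le> \<epsilon> / 8" by simp
      then have "\<delta> * norm v * sqrt (real CARD('m)) \<le> \<epsilon> / 8 * sqrt (real CARD('m))"
        by (intro mult_right_mono) auto
      then show "\<delta> * norm v * sqrt (real CARD('m)) / \<sigma> \<le> \<epsilon> * sqrt (real CARD('m)) / (8 * \<sigma>)"
        using \<sigma> by (simp add: divide_right_mono field_simps)
    qed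
    finally show ?thesis .
  qed
qed

lemma sets_lborel_pair: "sets (lborel \<Otimes>\<^sub>M lborel :: ('a::euclidean_space \<times> 'b::euclidean_space) measure) = sets borel"
  by (subst lborel_prod) simp

lemma split3:
  fixes F :: "(real^'n^'m) \<times> (real^'m) \<times> (real^'n) \<Rightarrow> ennreal"
  assumes Fm: "F \<in> borel_measurable borel"
  shows "(\<integral>\<^sup>+x. F x \<partial>lborel) = (\<integral>\<^sup>+A. \<integral>\<^sup>+b. \<integral>\<^sup>+c. F (A,b,c) \<partial>lborel \<partial>lborel \<partial>lborel)"
    and "(\<integral>\<^sup>+x. F x \<partial>lborel) = (\<integral>\<^sup>+A. \<integral>\<^sup>+c. \<integral>\<^sup>+b. F (A,b,c) \<partial>lborel \<partial>lborel \<partial>lborel)"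
proof -
  have F1: "F \<in> borel_measurable (lborel \<Otimes>\<^sub>M lborel)"
    using Fm by (simp add: measurable_cong_sets[OF sets_lborel_pair refl])
  have e1: "(\<integral>\<^sup>+x. F x \<partial>lborel) = (\<integral>\<^sup>+A. \<integral>\<^sup>+bc. F (A,bc) \<partial>lborel \<partial>lborel)"
    by (subst lborel_prod[symmetric]) (rule lborel.nn_integral_fst[symmetric, OF F1])
  have FA: "(\<lambda>bc. F (A, bc)) \<in> borel_measurable borel" for A
    by (rule measurable_compose[OF _ Fm]) (intro borel_measurable_continuous_onI continuous_intros)
  have FA2: "(\<lambda>bc. F (A, bc)) \<in> borel_measurable (lborel \<Otimes>\<^sub>M lborel)" for A
    using FA[of A] by (simp add: measurable_cong_sets[OF sets_lborel_pair refl])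
  have e2: "(\<integral>\<^sup>+bc. F (A,bc) \<partial>lborel) = (\<integral>\<^sup>+b. \<integral>\<^sup>+c. F (A,b,c) \<partial>lborel \<partial>lborel)" for A
    by (subst lborel_prod[symmetric]) (rule lborel.nn_integral_fst[symmetric, OF FA2])
  have e3: "(\<integral>\<^sup>+b. \<integral>\<^sup>+c. F (A,b,c) \<partial>lborel \<partial>lborel) = (\<integral>\<^sup>+c. \<integral>\<^sup>+b. F (A,b,c) \<partial>lborel \<partial>lborel)" for A
  proof -
    have "(\<lambda>(b, c). F (A, b, c)) \<in> borel_measurable (lborel \<Otimes>\<^sub>M lborel)"
      using FA2[of A] by (simp add: case_prod_beta')
    from pair_sigma_finite.Fubini'[OF lborel_pair.pair_sigma_finite_axioms this] show ?thesis by simp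
  qed
  show "(\<integral>\<^sup>+x. F x \<partial>lborel) = (\<integral>\<^sup>+A. \<integral>\<^sup>+b. \<integral>\<^sup>+c. F (A,b,c) \<partial>lborel \<partial>lborel \<partial>lborel)"
    unfolding e1 e2 ..
  show "(\<integral>\<^sup>+x. F x \<partial>lborel) = (\<integral>\<^sup>+A. \<integral>\<^sup>+c. \<integral>\<^sup>+b. F (A,b,c) \<partial>lborel \<partial>lborel \<partial>lborel)"
    unfolding e1 e2 e3 ..
qed

theorem mainTheorem5:
  fixes Abar :: "real^'n^'m" and bbar :: "real^'m" and cbar :: "real^'n"
    and \<sigma> \<epsilon> :: real
  assumes "CARD('m) \<ge> CARD('n)"
    and "spec_norm Abar \<le> 1" and "norm bbar \<le> 1" and "norm cbar \<le> 1"
    and "0 < \<sigma>" and "\<sigma>\<^sup>2 \<le> 1"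
    and "0 < \<epsilon>"
  shows "\<exists>S \<in> sets (gauss_perturb Abar bbar cbar \<sigma>).
           {(A, b, c). lp_feasible_bounded A b c \<and>
              alpha_P A b c \<le> ereal (\<epsilon> / ((spec_norm A + 2)\<^sup>2 * (norm (lp_opt A b c) + 1)))}
             \<subseteq> S \<and>
           measure (gauss_perturb Abar bbar cbar \<sigma>) S
             \<le> 8 * \<epsilon> * real CARD('n) * (real CARD('m) + 1) / \<sigma>\<^sup>2"
proof -
  have \<sigma>: "0 < \<sigma>" and \<epsilon>: "0 < \<epsilon>" using assms by auto
  have \<sigma>1: "\<sigma> \<le> 1"
  proof (rule ccontr)
    assume "\<not> \<sigma> \<le> 1"
    then have "1 < \<sigma>" by simp
    then have "1 < \<sigma>\<^sup>2" by (simp add: power_less_one_iff one_less_power)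
    then show False using assms(6) by simp
  qed
  define gA where "gA A = (\<Prod>i\<in>UNIV. \<Prod>j\<in>UNIV. normal_density (Abar $ i $ j) \<sigma> (A $ i $ j))" for A :: "real^'n^'m"
  define gb where "gb b = (\<Prod>i\<in>UNIV. normal_density (bbar $ i) \<sigma> (b $ i))" for b :: "real^'m"
  define gc where "gc c = (\<Prod>j\<in>UNIV. normal_density (cbar $ j) \<sigma> (c $ j))" for c :: "real^'n"
  define f where "f x = ennreal (gA (fst x) * gb (fst (snd x)) * gc (snd (snd x)))" for x :: "(real^'n^'m) \<times> (real^'m) \<times> (real^'n)"
  have M: "gauss_perturb Abar bbar cbar \<sigma> = density lborel f"
    unfolding gauss_perturb_def f_def gA_def gb_def gc_def
    by (rule arg_cong[where f="density lborel"]) (auto simp: fun_eq_iff)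
  have gA0: "0 \<le> gA A" for A unfolding gA_def by (intro prod_nonneg) auto
  have gb0: "0 \<le> gb b" for b unfolding gb_def by (intro prod_nonneg) auto
  have gc0: "0 \<le> gc c" for c unfolding gc_def by (intro prod_nonneg) auto
  have gAm[measurable]: "gA \<in> borel_measurable borel"
    unfolding gA_def
    by (intro borel_measurable_prod measurable_compose[OF _ borel_measurable_normal_density]
        borel_measurable_continuous_onI continuous_intros)
  have gbm[measurable]: "gb \<in> borel_measurable borel" unfolding gb_def by (rule gvec_meas)
  have gcm[measurable]: "gc \<in> borel_measurable borel" unfolding gc_def by (rule gvec_meas)
  have fm[measurable]: "f \<in> borel_measurable borel"
  proof -
    have "(\<lambda>x::(real^'n^'m) \<times> (real^'m) \<times> (real^'n). gA (fst x)) \<in> borel_measurable borel"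
      by (rule measurable_compose[OF _ gAm]) (intro borel_measurable_continuous_onI continuous_intros)
    moreover have "(\<lambda>x::(real^'n^'m) \<times> (real^'m) \<times> (real^'n). gb (fst (snd x))) \<in> borel_measurable borel"
      by (rule measurable_compose[OF _ gbm]) (intro borel_measurable_continuous_onI continuous_intros)
    moreover have "(\<lambda>x::(real^'n^'m) \<times> (real^'m) \<times> (real^'n). gc (snd (snd x))) \<in> borel_measurable borel"
      by (rule measurable_compose[OF _ gcm]) (intro borel_measurable_continuous_onI continuous_intros)
    ultimately show ?thesis unfolding f_def by measurable
  qed
  have IA: "(\<integral>\<^sup>+A. ennreal (gA A) \<partial>lborel) = 1" unfolding gA_def using gauss_mat_integral[OF \<sigma>] .
  have Ib: "(\<integral>\<^sup>+b. ennreal (gb b) \<partial>lborel) = 1" unfolding gb_def using gauss_vec_integral[OF \<sigma>] .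
  have Ic: "(\<integral>\<^sup>+c. ennreal (gc c) \<partial>lborel) = 1" unfolding gc_def using gauss_vec_integral[OF \<sigma>] .
  define Nall where "Nall = {x::(real^'n^'m) \<times> (real^'m) \<times> (real^'n). \<exists>R k0. nset (dA x) (dc x) R k0}"
  define Bj where "Bj j = {x::(real^'n^'m) \<times> (real^'m) \<times> (real^'n). \<exists>R. bset \<epsilon> (dA x) (db x) (dc x) R j}" for j
  define S where "S = Nall \<union> (\<Union>j. Bj j)"
  have Nm: "Nall \<in> sets borel"
  proof -
    have "{x::(real^'n^'m) \<times> (real^'m) \<times> (real^'n) \<in> space borel. \<exists>R k0. nset (dA x) (dc x) R k0} \<in> sets borel"
      by measurable
    then show ?thesis unfolding Nall_def by simp
  qed
  have Bm: "Bj j \<in> sets borel" for j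
  proof -
    have "{x::(real^'n^'m) \<times> (real^'m) \<times> (real^'n) \<in> space borel. \<exists>R. bset \<epsilon> (dA x) (db x) (dc x) R j} \<in> sets borel"
      by measurable
    then show ?thesis unfolding Bj_def by simp
  qed
  have sM: "sets (gauss_perturb Abar bbar cbar \<sigma>) = sets borel" unfolding M by simp
  have Sm: "S \<in> sets borel" unfolding S_def using Nm Bm by auto
  have sub: "{(A, b, c). lp_feasible_bounded A b c \<and>
              alpha_P A b c \<le> ereal (\<epsilon> / ((spec_norm A + 2)\<^sup>2 * (norm (lp_opt A b c) + 1)))} \<subseteq> S"
  proof
    fix x :: "(real^'n^'m) \<times> (real^'m) \<times> (real^'n)"
    assume "x \<in> {(A, b, c). lp_feasible_bounded A b c \<and>
              alpha_P A b c \<le> ereal (\<epsilon> / ((spec_norm A + 2)\<^sup>2 * (norm (lp_opt A b c) + 1)))}"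
    then obtain A b c where x: "x = (A, b, c)" "lp_feasible_bounded A b c"
      "alpha_P A b c \<le> ereal (\<epsilon> / ((spec_norm A + 2)\<^sup>2 * (norm (lp_opt A b c) + 1)))"
      by auto
    from cover[OF x(2) \<epsilon> x(3)] show "x \<in> S"
      unfolding S_def Nall_def Bj_def x by auto
  qed
  define K where "K = \<epsilon> * sqrt (real CARD('m)) / (8 * \<sigma>)"
  have K0: "0 \<le> K" unfolding K_def using \<epsilon> \<sigma> by simp
  have eN: "emeasure (density lborel f) Nall = 0"
  proof -
    have "emeasure (density lborel f) Nall = (\<integral>\<^sup>+x. f x * indicator Nall x \<partial>lborel)"
      by (rule emeasure_density) (use Nm in auto)
    also have "\<dots> = (\<integral>\<^sup>+A. \<integral>\<^sup>+b. \<integral>\<^sup>+c. f (A,b,c) * indicator Nall (A,b,c) \<partial>lborel \<partial>lborel \<partial>lborel)"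
      by (rule split3(1)) (use Nm in measurable)
    also have "\<dots> = 0"
    proof -
      have inner: "(\<integral>\<^sup>+c. f (A,b,c) * indicator Nall (A,b,c) \<partial>lborel) = 0" for A :: "real^'n^'m" and b :: "real^'m"
      proof -
        have "(\<integral>\<^sup>+c. f (A,b,c) * indicator Nall (A,b,c) \<partial>lborel)
            = (\<integral>\<^sup>+c. f (A,b,c) * indicator {c. \<exists>R k0. nset A c R k0} c \<partial>lborel)"
          by (intro nn_integral_cong) (simp add: Nall_def indicator_def)
        also have "\<dots> = 0" by (rule nn_integral_null_set[OF nset_null])
        finally show ?thesis .
      qed
      show ?thesis by (simp add: inner)
    qed
    finally show ?thesis by simp
  qed
  have eB: "emeasure (density lborel f) (Bj j) \<le> ennreal K" for j
  proof -
    have "emeasure (density lborel f) (Bj j) = (\<integral>\<^sup>+x. f x * indicator (Bj j) x \<partial>lborel)"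
      by (rule emeasure_density) (use Bm in auto)
    also have "\<dots> = (\<integral>\<^sup>+A. \<integral>\<^sup>+c. \<integral>\<^sup>+b. f (A,b,c) * indicator (Bj j) (A,b,c) \<partial>lborel \<partial>lborel \<partial>lborel)"
      by (rule split3(2)) (use Bm in measurable)
    also have "\<dots> \<le> (\<integral>\<^sup>+A. \<integral>\<^sup>+c. ennreal (gA A) * ennreal (gc c) * ennreal K \<partial>lborel \<partial>lborel)"
    proof (intro nn_integral_mono)
      fix A :: "real^'n^'m" and c :: "real^'n"
      define E where "E = {b. \<exists>R. bset \<epsilon> A b c R j}"
      have indm: "(\<lambda>b. indicator (Bj j) (A, b, c) :: ennreal) \<in> borel_measurable borel"
        by (rule measurable_compose[of "\<lambda>b. (A, b, c)" borel borel])
           (auto intro!: borel_measurable_continuous_onI continuous_intros borel_measurable_indicator Bm)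
      have "(\<integral>\<^sup>+b. f (A,b,c) * indicator (Bj j) (A,b,c) \<partial>lborel)
          = (\<integral>\<^sup>+b. (ennreal (gA A) * ennreal (gc c)) * (ennreal (gb b) * indicator (Bj j) (A,b,c)) \<partial>lborel)"
        by (intro nn_integral_cong) (simp add: f_def ennreal_mult gA0 gb0 gc0 mult_nonneg_nonneg mult_ac)
      also have "\<dots> = (ennreal (gA A) * ennreal (gc c)) * (\<integral>\<^sup>+b. ennreal (gb b) * indicator (Bj j) (A,b,c) \<partial>lborel)"
        by (rule nn_integral_cmult) (use indm in measurable)
      also have "(\<integral>\<^sup>+b. ennreal (gb b) * indicator (Bj j) (A,b,c) \<partial>lborel) = (\<integral>\<^sup>+b. ennreal (gb b) * indicator E b \<partial>lborel)"
        by (intro nn_integral_cong) (simp add: Bj_def E_def indicator_def)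
      also have "\<dots> \<le> ennreal K" unfolding gb_def E_def K_def by (rule slice_bound[OF \<sigma> \<epsilon>])
      finally show "(\<integral>\<^sup>+b. f (A,b,c) * indicator (Bj j) (A,b,c) \<partial>lborel) \<le> ennreal (gA A) * ennreal (gc c) * ennreal K"
        by (simp add: mult_left_mono)
    qed
    also have "\<dots> = ennreal K"
    proof -
      have "(\<integral>\<^sup>+c. ennreal (gA A) * ennreal (gc c) * ennreal K \<partial>lborel) = ennreal (gA A) * ennreal K" for A
      proof -
        have "(\<integral>\<^sup>+c. ennreal (gA A) * ennreal (gc c) * ennreal K \<partial>lborel) = (\<integral>\<^sup>+c. (ennreal (gA A) * ennreal K) * ennreal (gc c) \<partial>lborel)"
          by (simp add: mult_ac)
        also have "\<dots> = (ennreal (gA A) * ennreal K) * (\<integral>\<^sup>+c. ennreal (gc c) \<partial>lborel)"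
          by (rule nn_integral_cmult) measurable
        finally show ?thesis using Ic by simp
      qed
      then have "(\<integral>\<^sup>+A. \<integral>\<^sup>+c. ennreal (gA A) * ennreal (gc c) * ennreal K \<partial>lborel \<partial>lborel) = (\<integral>\<^sup>+A. ennreal (gA A) * ennreal K \<partial>lborel)"
        by simp
      also have "\<dots> = (\<integral>\<^sup>+A. ennreal (gA A) \<partial>lborel) * ennreal K"
        by (rule nn_integral_multc) measurable
      finally show ?thesis using IA by simp
    qed
    finally show ?thesis .
  qed
  have eS: "emeasure (density lborel f) S \<le> ennreal (real CARD('n) * K)"
  proof -
    have "emeasure (density lborel f) S \<le> emeasure (density lborel f) Nall + emeasure (density lborel f) (\<Union>j. Bj j)"
      unfolding S_def by (rule emeasure_subadditive) (use Nm Bm in auto)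
    also have "emeasure (density lborel f) (\<Union>j. Bj j) \<le> (\<Sum>j\<in>UNIV. emeasure (density lborel f) (Bj j))"
      by (rule emeasure_subadditive_finite) (use Bm in auto)
    also have "\<dots> \<le> (\<Sum>j\<in>(UNIV::'n set). ennreal K)" by (intro sum_mono eB)
    also have "\<dots> = ennreal (real CARD('n) * K)" using K0 by (simp add: ennreal_mult' ennreal_of_nat_eq_real_of_nat)
    finally show ?thesis using eN by simp
  qed
  have bound: "real CARD('n) * K \<le> 8 * \<epsilon> * real CARD('n) * (real CARD('m) + 1) / \<sigma>\<^sup>2"
  proof -
    have sq: "sqrt (real CARD('m)) \<le> real CARD('m) + 1"
    proof -
      have "sqrt (real CARD('m)) \<le> sqrt ((real CARD('m) + 1)\<^sup>2)"
      proof (intro real_sqrt_le_mono)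
        have "0 \<le> real CARD('m) * real CARD('m)" by simp
        moreover have "(real CARD('m) + 1)\<^sup>2 = real CARD('m) * real CARD('m) + 2 * real CARD('m) + 1"
          by (simp add: power2_eq_square algebra_simps)
        ultimately show "real CARD('m) \<le> (real CARD('m) + 1)\<^sup>2" by linarith
      qed
      then show ?thesis by simp
    qed
    have s2: "1 / \<sigma> \<le> 1 / \<sigma>\<^sup>2"
      using \<sigma> \<sigma>1 by (simp add: divide_le_eq field_simps power2_eq_square mult_le_cancel_left1)
    have "K = (\<epsilon> / 8) * sqrt (real CARD('m)) * (1 / \<sigma>)" unfolding K_def by simp
    also have "\<dots> \<le> (\<epsilon> / 8) * (real CARD('m) + 1) * (1 / \<sigma>\<^sup>2)"
      using sq s2 \<epsilon> \<sigma> by (intro mult_mono) auto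
    also have "\<dots> \<le> 8 * \<epsilon> * (real CARD('m) + 1) / \<sigma>\<^sup>2"
      using \<epsilon> \<sigma> by (simp add: field_simps)
    finally have "K \<le> 8 * \<epsilon> * (real CARD('m) + 1) / \<sigma>\<^sup>2" .
    then have "real CARD('n) * K \<le> real CARD('n) * (8 * \<epsilon> * (real CARD('m) + 1) / \<sigma>\<^sup>2)"
      by (intro mult_left_mono) auto
    then show ?thesis by (simp add: field_simps)
  qed
  have "measure (gauss_perturb Abar bbar cbar \<sigma>) S \<le> real CARD('n) * K"
  proof -
    have "measure (density lborel f) S = enn2real (emeasure (density lborel f) S)" by (simp add: measure_def)
    also have "\<dots> \<le> enn2real (ennreal (real CARD('n) * K))"
      by (rule enn2real_mono[OF eS]) simp
    also have "\<dots> = real CARD('n) * K" using K0 by simp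
    finally show ?thesis unfolding M .
  qed
  then have "measure (gauss_perturb Abar bbar cbar \<sigma>) S \<le> 8 * \<epsilon> * real CARD('n) * (real CARD('m) + 1) / \<sigma>\<^sup>2"
    using bound by linarith
  moreover have "S \<in> sets (gauss_perturb Abar bbar cbar \<sigma>)" using Sm sM by simp
  ultimately show ?thesis using sub by blast
qed

end
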